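(* Let $(G_k,y)$ be a mass-action system whose edge set is partitioned as $E=E^1\dot\cup\cdots\dot\cup E^\ell$ into $\ell$ connected, independent subnetworks ($S=S_1\oplus\cdots\oplus S_\ell$), and assume: (I) $\ker\Gamma_k\cap\mathbb{R}^{V^\sqcup_s}_{>0}\neq\emptyset$; (IIa) $K=L$, or (IIb) $L=S$; (III) for every $j=1,\dots,\ell$: $d_j\le1$ and $K_j=L_j$; and if $d_j=1$, then $\sum_{i'=1}^{i}\tilde b^j_{i'}\ge0$ for all $i=1,\dots,\omega_j-1$ (or $\le0$ for all such $i$) and $\tilde b^j_1\cdot\tilde b^j_{\omega_j}<0$. Then, under (IIa), for every $x'\in\mathbb{R}^n_{>0}$ there is exactly one positive equilibrium in the kinetic compatibility class $(x'+K)\cap\mathbb{R}^n_{>0}$; under (IIb), for every $x'\in\mathbb{R}^n_{>0}$ there is exactly one positive equilibrium in the stoichiometric compatibility class $(x'+S)\cap\mathbb{R}^n_{>0}$.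
   Context: A reaction network $(G,y)$: finite simple digraph $G=(V,E)$ and map $y:V\to\mathbb{R}^n$; rate constants $k\in\mathbb{R}^E_{>0}$ give a mass-action system with ODE $\dot x=\sum_{(i\to i')\in E}k_{i\to i'}\,x^{y(i)}(y(i')-y(i))$ on $\mathbb{R}^n_{>0}$, where $x^{y}=\prod_r x_r^{y_r}$. A positive equilibrium is $x\in\mathbb{R}^n_{>0}$ where the right-hand side vanishes. $V_s$: source vertices. $Y\in\mathbb{R}^{n\times V}$ has columns $y(i)$; $R_k\in\mathbb{R}^{V\times V_s}$ is the rectangular Laplacian ($(R_k)_{i,j}=k_{j\to i}$ if $(j\to i)\in E$, $(R_k)_{j,j}=-\sum_{(j\to i')\in E}k_{j\to i'}$, else $0$); $S=\operatorname{span}\{y(i')-y(i):(i\to i')\in E\}$ and $K=\operatorname{im}(YR_k)$. Subnetworks: $G^j=(V^j,E^j)$ with $V^j$ the vertices incident to $E^j$, source vertices $V^j_s$, $Y^j$, $Y^j_s$ the complex and source-complex matrices, $R^j_k\in\mathbb{R}^{V^j\times V^j_s}$ the rectangular Laplacian of $G^j$ with $k$ restricted to $E^j$, $S_j=\operatorname{span}\{y(i')-y(i):(i\to i')\in E^j\}$, $K_j=\operatorname{im}(Y^jR^j_k)$, $L_j=\operatorname{span}\{y(i)-y(i'):i,i'\in V^j_s\}$, $L=L_1+\cdots+L_\ell$. Connected means each $G^j$ is weakly connected; independent means $S=S_1\oplus\cdots\oplus S_\ell$. $V^\sqcup_s=V^1_s\sqcup\cdots\sqcup V^\ell_s$ (disjoint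 union), $\Gamma^j_k=Y^jR^j_k$, $\Gamma_k=(\Gamma^1_k\ \cdots\ \Gamma^\ell_k)\in\mathbb{R}^{n\times V^\sqcup_s}$. $d_j=\dim\ker\begin{pmatrix}Y^j_s\\1^{\mathsf T}_{V^j_s}\end{pmatrix}$. For $j$ with $d_j=1$ (and $K_j=L_j$), the set $P_j=\{\xi\in\ker\Gamma^j_k\cap\mathbb{R}^{V^j_s}_{>0}:\sum_i\xi_i=1\}$ is one-dimensional; let $y^{j,1},y^{j,2}$ be the endpoints of its closure $\{\xi\in\ker\Gamma^j_k\cap\mathbb{R}^{V^j_s}_{\ge0}:\sum_i\xi_i=1\}$, $q^j=(y^{j,1}-y^{j,2})\circ(y^{j,1}+y^{j,2})^{-1}$ (componentwise), with $V^j_s$ ordered so that $1=q^j_1\ge\cdots\ge q^j_{|V^j_s|}=-1$; let $I^j_1,\dots,I^j_{\omega_j}$ be the classes of equal consecutive components of $q^j$ (in decreasing order of the common value); let $b^j\in\mathbb{R}^{V^j_s}$ span $\ker\begin{pmatrix}Y^j_s\\1^{\mathsf T}_{V^j_s}\end{pmatrix}$ and $\tilde b^j_i=\sum_{i'\in I^j_i}b^j_{i'}$. *)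

theory Defs
  imports "HOL-Analysis.Analysis"
begin

text \<open>Vectors in R^V (or R^{V_s}) are represented as real^'v, with entries outside the
  relevant index set ignored or required to vanish.\<close>

definition simple_digraph :: "'v set \<Rightarrow> ('v \<times> 'v) set \<Rightarrow> bool" where
  "simple_digraph V E \<longleftrightarrow> E \<subseteq> V \<times> V \<and> (\<forall>(i, i') \<in> E. i \<noteq> i')"

definition sources :: "('v \<times> 'v) set \<Rightarrow> 'v set" where
  "sources E = fst ` E"

definition verts :: "('v \<times> 'v) set \<Rightarrow> 'v set" where
  "verts E = fst ` E \<union> snd ` E"

definition weakly_connected :: "('v \<times> 'v) set \<Rightarrow> bool" where
  "weakly_connected E \<longleftrightarrow> (\<forall>a \<in> verts E. \<forall>b \<in> verts E. (a, b) \<in> (E \<union> E\<inverse>)\<^sup>*)"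

definition monom :: "real^'n \<Rightarrow> real^'n \<Rightarrow> real" where
  "monom x v = (\<Prod>r\<in>UNIV. (x $ r) powr (v $ r))"

definition ma_rhs :: "('v \<times> 'v) set \<Rightarrow> ('v \<times> 'v \<Rightarrow> real) \<Rightarrow> ('v \<Rightarrow> real^'n) \<Rightarrow> real^'n \<Rightarrow> real^'n" where
  "ma_rhs E k y x = (\<Sum>(i, i') \<in> E. (k (i, i') * monom x (y i)) *\<^sub>R (y i' - y i))"

definition positive_vec :: "real^'n \<Rightarrow> bool" where
  "positive_vec x \<longleftrightarrow> (\<forall>r. x $ r > 0)"

definition pos_equilibrium :: "('v \<times> 'v) set \<Rightarrow> ('v \<times> 'v \<Rightarrow> real) \<Rightarrow> ('v \<Rightarrow> real^'n) \<Rightarrow> real^'n \<Rightarrow> bool" where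
  "pos_equilibrium E k y x \<longleftrightarrow> positive_vec x \<and> ma_rhs E k y x = 0"

text \<open>rectangular Laplacian: entry (i,j) for i a vertex, j a source vertex\<close>
definition lap :: "('v::finite \<times> 'v) set \<Rightarrow> ('v \<times> 'v \<Rightarrow> real) \<Rightarrow> 'v \<Rightarrow> 'v \<Rightarrow> real" where
  "lap E k i j = (if (j, i) \<in> E then k (j, i)
                  else if i = j then - (\<Sum>i' \<in> {i'. (j, i') \<in> E}. k (j, i'))
                  else 0)"

text \<open>the matrix Y R_k applied to a vector xi in R^{V_s} (V the vertex set)\<close>
definition gam :: "'v::finite set \<Rightarrow> ('v \<times> 'v) set \<Rightarrow> ('v \<times> 'v \<Rightarrow> real) \<Rightarrow> ('v \<Rightarrow> real^'n) \<Rightarrow> real^'v \<Rightarrow> real^'n" where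
  "gam V E k y \<xi> = (\<Sum>i \<in> V. (\<Sum>j \<in> sources E. lap E k i j * \<xi> $ j) *\<^sub>R y i)"

definition kin_space :: "'v::finite set \<Rightarrow> ('v \<times> 'v) set \<Rightarrow> ('v \<times> 'v \<Rightarrow> real) \<Rightarrow> ('v \<Rightarrow> real^'n) \<Rightarrow> (real^'n) set" where
  "kin_space V E k y = range (gam V E k y)"

definition stoich_space :: "('v \<Rightarrow> real^'n) \<Rightarrow> ('v \<times> 'v) set \<Rightarrow> (real^'n) set" where
  "stoich_space y E = span {y i' - y i | i i'. (i, i') \<in> E}"

definition L_space :: "('v \<Rightarrow> real^'n) \<Rightarrow> ('v \<times> 'v) set \<Rightarrow> (real^'n) set" where
  "L_space y E = span {y i - y i' | i i'. i \<in> sources E \<and> i' \<in> sources E}"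

definition independent_subnets :: "nat \<Rightarrow> (nat \<Rightarrow> (real^'n) set) \<Rightarrow> (real^'n) set \<Rightarrow> bool" where
  "independent_subnets l Ss S \<longleftrightarrow>
     S = {(\<Sum>j<l. v j) | v. \<forall>j<l. v j \<in> Ss j} \<and>
     (\<forall>v. (\<forall>j<l. v j \<in> Ss j) \<and> (\<Sum>j<l. v j) = 0 \<longrightarrow> (\<forall>j<l. v j = 0))"

definition defic_kernel :: "('v \<Rightarrow> real^'n) \<Rightarrow> ('v::finite \<times> 'v) set \<Rightarrow> (real^'v) set" where
  "defic_kernel y E = {\<xi>. (\<forall>i. i \<notin> sources E \<longrightarrow> \<xi> $ i = 0) \<and>
       (\<Sum>i \<in> sources E. (\<xi> $ i) *\<^sub>R y i) = 0 \<and> (\<Sum>i \<in> sources E. \<xi> $ i) = 0}"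

definition defic :: "('v \<Rightarrow> real^'n) \<Rightarrow> ('v::finite \<times> 'v) set \<Rightarrow> nat" where
  "defic y E = dim (defic_kernel y E)"

definition Pclos :: "('v::finite \<times> 'v) set \<Rightarrow> ('v \<times> 'v \<Rightarrow> real) \<Rightarrow> ('v \<Rightarrow> real^'n) \<Rightarrow> (real^'v) set" where
  "Pclos E k y = {\<xi>. (\<forall>i. i \<notin> sources E \<longrightarrow> \<xi> $ i = 0) \<and> (\<forall>i \<in> sources E. \<xi> $ i \<ge> 0) \<and>
       gam (verts E) E k y \<xi> = 0 \<and> (\<Sum>i \<in> sources E. \<xi> $ i) = 1}"

text \<open>The sign condition of (III) for a subnetwork with d_j = 1.  e1, e2 are the endpoints of
  the segment Pclos, q the componentwise quotient, the classes I_1..I_omega are the level sets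
  of q on V^j_s in decreasing order of the value, b spans the kernel, tb m = tilde b_m.\<close>
definition sign_cond :: "('v::finite \<times> 'v) set \<Rightarrow> ('v \<times> 'v \<Rightarrow> real) \<Rightarrow> ('v \<Rightarrow> real^'n) \<Rightarrow> bool" where
  "sign_cond E k y \<longleftrightarrow>
    (\<exists>e1 e2 b. Pclos E k y = closed_segment e1 e2 \<and> e1 \<noteq> e2 \<and>
       b \<noteq> 0 \<and> defic_kernel y E = span {b} \<and>
       (let q = (\<lambda>i. (e1 $ i - e2 $ i) / (e1 $ i + e2 $ i));
            cs = rev (sorted_list_of_set (q ` sources E));
            \<omega> = length cs;
            tb = (\<lambda>m. \<Sum>i \<in> {i \<in> sources E. q i = cs ! (m - 1)}. b $ i)
        in ((\<forall>i \<in> {1..<\<omega>}. (\<Sum>m = 1..i. tb m) \<ge> 0) \<or> (\<forall>i \<in> {1..<\<omega>}. (\<Sum>m = 1..i. tb m) \<le> 0))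
           \<and> tb 1 * tb \<omega> < 0))"

end

theory Submission
  imports Defs
begin

definition Gm :: "('v::finite \<times> 'v) set \<Rightarrow> ('v \<times> 'v \<Rightarrow> real) \<Rightarrow> ('v \<Rightarrow> real^'n) \<Rightarrow> real^'v \<Rightarrow> real^'n" where
 "Gm E k y \<xi> = (\<Sum>e\<in>E. (k e * \<xi>$(fst e)) *\<^sub>R (y (snd e) - y (fst e)))"

definition mu :: "('v::finite \<Rightarrow> real^'n) \<Rightarrow> real^'n \<Rightarrow> real^'v" where
 "mu y x = (\<chi> i. monom x (y i))"

definition lnv :: "real^'n \<Rightarrow> real^'n" where
 "lnv x = (\<chi> r. ln (x$r))"

lemma lap_col:
  fixes E :: "('v::finite \<times> 'v) set" and y :: "'v \<Rightarrow> real^'n"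
  assumes j: "j \<in> sources E" and V: "verts E \<subseteq> V" and nl: "\<forall>(i,i')\<in>E. i\<noteq>i'"
  shows "(\<Sum>i\<in>V. lap E k i j *\<^sub>R y i) = (\<Sum>i\<in>{i. (j,i)\<in>E}. k(j,i) *\<^sub>R (y i - y j))"
proof -
  let ?A = "{i. (j,i)\<in>E}"
  have jV: "j \<in> V" using j V unfolding sources_def verts_def by auto
  have AV: "?A \<subseteq> V" using V unfolding verts_def by force
  have jA: "j \<notin> ?A" using nl by auto
  have "\<And>i. i \<in> V \<Longrightarrow> lap E k i j *\<^sub>R y i = (if i\<in>?A then k(j,i) *\<^sub>R y i else 0) + (if i = j then (-(\<Sum>i'\<in>?A. k(j,i'))) *\<^sub>R y j else 0)"
    using jA unfolding lap_def by auto
  then have "(\<Sum>i\<in>V. lap E k i j *\<^sub>R y i) = (\<Sum>i\<in>V. (if i\<in>?A then k(j,i) *\<^sub>R y i else 0)) + (\<Sum>i\<in>V. (if i = j then (-(\<Sum>i'\<in>?A. k(j,i'))) *\<^sub>R y j else 0))"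
    by (simp add: sum.distrib)
  also have "(\<Sum>i\<in>V. (if i\<in>?A then k(j,i) *\<^sub>R y i else 0)) = (\<Sum>i\<in>?A. k(j,i) *\<^sub>R y i)"
    using AV by (simp add: sum.If_cases Int_absorb1 inf.absorb2)
  also have "(\<Sum>i\<in>V. (if i = j then (-(\<Sum>i'\<in>?A. k(j,i'))) *\<^sub>R y j else 0)) = (-(\<Sum>i'\<in>?A. k(j,i'))) *\<^sub>R y j"
    using jV by simp
  also have "(\<Sum>i\<in>?A. k(j,i) *\<^sub>R y i) + (-(\<Sum>i'\<in>?A. k(j,i'))) *\<^sub>R y j = (\<Sum>i\<in>?A. k(j,i) *\<^sub>R (y i - y j))"
    by (simp add: scaleR_diff_right sum_subtractf scaleR_sum_left)
  finally show ?thesis .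
qed

lemma gam_eq:
  fixes E :: "('v::finite \<times> 'v) set" and y :: "'v \<Rightarrow> real^'n"
  assumes V: "verts E \<subseteq> V" and nl: "\<forall>(i,i')\<in>E. i\<noteq>i'"
  shows "gam V E k y \<xi> = Gm E k y \<xi>"
proof -
  have "gam V E k y \<xi> = (\<Sum>i\<in>V. \<Sum>j\<in>sources E. (lap E k i j * \<xi> $ j) *\<^sub>R y i)"
    unfolding gam_def by (simp add: scaleR_sum_left)
  also have "\<dots> = (\<Sum>j\<in>sources E. \<Sum>i\<in>V. (lap E k i j * \<xi> $ j) *\<^sub>R y i)"
    by (rule sum.swap)
  also have "\<dots> = (\<Sum>j\<in>sources E. \<xi> $ j *\<^sub>R (\<Sum>i\<in>V. lap E k i j *\<^sub>R y i))"
    by (simp add: scaleR_sum_right mult.commute)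
  also have "\<dots> = (\<Sum>j\<in>sources E. \<xi> $ j *\<^sub>R (\<Sum>i\<in>{i. (j,i)\<in>E}. k(j,i) *\<^sub>R (y i - y j)))"
    by (rule sum.cong[OF refl]) (simp add: lap_col[OF _ V nl])
  also have "\<dots> = (\<Sum>j\<in>sources E. \<Sum>i\<in>{i. (j,i)\<in>E}. (k(j,i) * \<xi> $ j) *\<^sub>R (y i - y j))"
    by (simp add: scaleR_sum_right mult.commute)
  also have "\<dots> = (\<Sum>(j,i)\<in>Sigma (sources E) (\<lambda>j. {i. (j,i)\<in>E}). (k(j,i) * \<xi> $ j) *\<^sub>R (y i - y j))"
    by (rule sum.Sigma) auto
  also have "Sigma (sources E) (\<lambda>j. {i. (j,i)\<in>E}) = E"
    unfolding sources_def by force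
  finally show ?thesis unfolding Gm_def by (simp add: split_def)
qed

lemma gam_eq':
  fixes E :: "('v::finite \<times> 'v) set" and y :: "'v \<Rightarrow> real^'n"
  assumes nl: "\<forall>(i,i')\<in>E. i\<noteq>i'"
  shows "gam (verts E) E k y = Gm E k y"
  using gam_eq[OF order_refl nl] by auto

lemma Gm_linear: "linear (Gm E k y)"
proof (rule linearI)
  fix b1 b2 :: "real^'a"
  show "Gm E k y (b1 + b2) = Gm E k y b1 + Gm E k y b2"
    unfolding Gm_def sum.distrib[symmetric] by (intro sum.cong) (auto simp: algebra_simps)
next
  fix c and b :: "real^'a"
  show "Gm E k y (c *\<^sub>R b) = c *\<^sub>R Gm E k y b"
    unfolding Gm_def scaleR_sum_right by (intro sum.cong) (auto simp: algebra_simps)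
qed

lemma Gm_src:
  assumes "\<forall>i\<in>sources E. \<xi>$i = \<xi>'$i"
  shows "Gm E k y \<xi> = Gm E k y \<xi>'"
  unfolding Gm_def using assms unfolding sources_def by (intro sum.cong) auto

lemma Gm_scale_src:
  assumes "\<forall>i\<in>sources E. \<xi>$i = c * \<zeta>$i"
  shows "Gm E k y \<xi> = c *\<^sub>R Gm E k y \<zeta>"
proof -
  have "Gm E k y \<xi> = Gm E k y (c *\<^sub>R \<zeta>)" using assms by (intro Gm_src) simp
  also have "\<dots> = c *\<^sub>R Gm E k y \<zeta>" using linear_scale[OF Gm_linear] by blast
  finally show ?thesis .
qed

lemma Gm_stoich: "Gm E k y \<xi> \<in> stoich_space y E"
  unfolding Gm_def stoich_space_def
  by (intro span_sum span_mul span_base) force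

lemma Gm_Union:
  fixes Es :: "nat \<Rightarrow> ('v::finite \<times> 'v) set"
  assumes "\<forall>j<l. \<forall>j'<l. j \<noteq> j' \<longrightarrow> Es j \<inter> Es j' = {}"
  shows "Gm (\<Union>j<l. Es j) k y \<xi> = (\<Sum>j<l. Gm (Es j) k y \<xi>)"
  unfolding Gm_def using assms by (intro sum.UNION_disjoint) auto

lemma ma_rhs_Gm: "ma_rhs E k y x = Gm E k y (mu y x)"
  unfolding ma_rhs_def Gm_def mu_def by (simp add: split_def)

lemma ln_monom:
  assumes "positive_vec x"
  shows "ln (monom x v) = v \<bullet> lnv x"
proof -
  have "ln (monom x v) = (\<Sum>r\<in>UNIV. ln ((x $ r) powr (v $ r)))"
    unfolding monom_def using assms unfolding positive_vec_def by (intro ln_prod) (auto simp: less_imp_neq[symmetric])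
  also have "\<dots> = v \<bullet> lnv x"
    using assms unfolding positive_vec_def inner_vec_def lnv_def by (simp add: ln_powr)
  finally show ?thesis .
qed

lemma monom_pos: "positive_vec x \<Longrightarrow> monom x v > 0"
  unfolding monom_def positive_vec_def by (intro prod_pos) (metis powr_gt_zero less_irrefl)

lemma birch_unique:
  fixes L :: "(real^'n) set"
  assumes p1: "positive_vec x1" and p2: "positive_vec x2" and d: "x1 - x2 \<in> L"
    and o1: "\<forall>v\<in>L. (lnv x1 - a) \<bullet> v = 0" and o2: "\<forall>v\<in>L. (lnv x2 - a) \<bullet> v = 0"
  shows "x1 = x2"
proof -
  have "(lnv x1 - lnv x2) \<bullet> (x1 - x2) = (lnv x1 - a) \<bullet> (x1 - x2) - (lnv x2 - a) \<bullet> (x1 - x2)"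
    by (simp add: inner_diff_left)
  also have "\<dots> = 0" using o1 o2 d by simp
  finally have "(\<Sum>r\<in>UNIV. (ln (x1$r) - ln (x2$r)) * (x1$r - x2$r)) = 0"
    by (simp add: inner_vec_def lnv_def)
  moreover have nn: "\<forall>r\<in>UNIV. (ln (x1$r) - ln (x2$r)) * (x1$r - x2$r) \<ge> 0"
  proof
    fix r
    have a: "x1$r > 0" "x2$r > 0" using p1 p2 unfolding positive_vec_def by auto
    show "(ln (x1$r) - ln (x2$r)) * (x1$r - x2$r) \<ge> 0"
    proof (cases "x1$r \<le> x2$r")
      case True
      then have "ln (x1$r) \<le> ln (x2$r)" using a by simp
      then show ?thesis using True by (intro mult_nonpos_nonpos) auto
    next
      case False
      then have "ln (x1$r) \<ge> ln (x2$r)" using a by simp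
      then show ?thesis using False by (intro mult_nonneg_nonneg) auto
    qed
  qed
  ultimately have z: "\<forall>r\<in>UNIV. (ln (x1$r) - ln (x2$r)) * (x1$r - x2$r) = 0"
    using sum_nonneg_eq_0_iff[of UNIV "\<lambda>r. (ln (x1$r) - ln (x2$r)) * (x1$r - x2$r)"] nn by auto
  show ?thesis
    unfolding vec_eq_iff
  proof
    fix r
    have a: "x1$r > 0" "x2$r > 0" using p1 p2 unfolding positive_vec_def by auto
    from z have "ln (x1$r) = ln (x2$r) \<or> x1$r = x2$r" by simp
    then show "x1$r = x2$r" using a by auto
  qed
qed

lemma exp_quad: "t \<ge> 0 \<Longrightarrow> t^2/4 \<le> exp (t::real)"
proof -
  assume t: "t \<ge> 0"
  have "t/2 \<le> 1 + t/2" by simp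
  also have "\<dots> \<le> exp (t/2)" by (rule exp_ge_add_one_self)
  finally have h: "t/2 \<le> exp (t/2)" .
  have "t^2/4 = (t/2)^2" by (simp add: power2_eq_square)
  also have "\<dots> \<le> (exp (t/2))^2" using h t by (intro power_mono) auto
  also have "\<dots> = exp t" by (simp add: power2_eq_square exp_add[symmetric])
  finally show ?thesis .
qed

lemma coord_bound:
  fixes c p t :: real
  assumes p: "p > 0"
  shows "exp (c + t) - p * t \<ge> p * \<bar>t\<bar> - 4 * p^2 / exp c"
proof (cases "t \<ge> 0")
  case True
  have e: "exp (c + t) = exp c * exp t" by (simp add: exp_add)
  have "exp c * (t^2/4) \<le> exp c * exp t" using exp_quad[OF True] by simp
  moreover have "2 * p * t - exp c * (t^2/4) \<le> 4 * p^2 / exp c"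
  proof -
    have "exp c * (2*p*t - exp c * (t^2/4)) \<le> 4 * p^2"
    proof -
      have "0 \<le> (exp c * t - 4*p)^2" by simp
      then show ?thesis by (simp add: power2_eq_square algebra_simps)
    qed
    then show ?thesis by (simp add: field_simps)
  qed
  ultimately have "2 * p * t - exp c * exp t \<le> 4 * p^2 / exp c" by linarith
  then show ?thesis using True e by (simp add: abs_of_nonneg algebra_simps)
next
  case False
  have "0 \<le> 4 * p^2 / exp c" by simp
  moreover have "exp (c+t) > 0" by simp
  moreover have "p * \<bar>t\<bar> = - (p * t)" using False by (simp add: abs_of_neg)
  ultimately show ?thesis by linarith
qed

lemma birch_exists:
  fixes L :: "(real^'n) set" and a x' :: "real^'n"
  assumes L: "subspace L" and xp: "positive_vec x'"
  shows "\<exists>x. positive_vec x \<and> x - x' \<in> L \<and> (\<forall>v\<in>L. (lnv x - a) \<bullet> v = 0)"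
proof -
  define W where "W = {w::real^'n. \<forall>v\<in>L. w \<bullet> v = 0}"
  define G where "G w = (\<Sum>r\<in>UNIV. exp (a$r + w$r) - x'$r * w$r)" for w :: "real^'n"
  have Wsub: "subspace W" unfolding W_def subspace_def by (auto simp: inner_add_left)
  have Wcl: "closed W" by (rule closed_subspace[OF Wsub])
  have Gc: "continuous_on UNIV G" unfolding G_def by (intro continuous_intros)
  define m where "m = Min (range (\<lambda>r. x'$r))"
  have m: "m > 0" unfolding m_def using xp unfolding positive_vec_def by (subst Min_gr_iff) auto
  have mle: "\<And>r. m \<le> x'$r" unfolding m_def by auto
  define C where "C = (\<Sum>r\<in>UNIV. 4 * (x'$r)^2 / exp (a$r))"
  have Gb: "G w \<ge> m * norm w - C" for w
  proof -
    have "m * norm w \<le> m * (\<Sum>r\<in>UNIV. \<bar>w$r\<bar>)" using m by (simp add: norm_le_l1_cart)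
    also have "\<dots> = (\<Sum>r\<in>UNIV. m * \<bar>w$r\<bar>)" by (simp add: sum_distrib_left)
    also have "\<dots> \<le> (\<Sum>r\<in>UNIV. x'$r * \<bar>w$r\<bar>)" by (intro sum_mono mult_right_mono mle) auto
    finally have 1: "m * norm w \<le> (\<Sum>r\<in>UNIV. x'$r * \<bar>w$r\<bar>)" .
    have "(\<Sum>r\<in>UNIV. x'$r * \<bar>w$r\<bar>) - C = (\<Sum>r\<in>UNIV. x'$r * \<bar>w$r\<bar> - 4 * (x'$r)^2 / exp (a$r))"
      unfolding C_def by (simp add: sum_subtractf)
    also have "\<dots> \<le> G w" unfolding G_def
      using xp unfolding positive_vec_def by (intro sum_mono coord_bound) auto
    finally show ?thesis using 1 by simp
  qed
  define S where "S = W \<inter> {w. G w \<le> G 0}"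
  have Scl: "closed S" unfolding S_def
    by (intro closed_Int Wcl closed_Collect_le continuous_on_const) (rule Gc)
  have Sbd: "bounded S"
  proof -
    have "\<forall>w\<in>S. norm w \<le> (G 0 + C) / m"
    proof
      fix w assume "w \<in> S"
      then have "m * norm w - C \<le> G 0" using Gb[of w] unfolding S_def by auto
      then show "norm w \<le> (G 0 + C) / m" using m by (simp add: field_simps)
    qed
    then show ?thesis unfolding bounded_iff by blast
  qed
  have S0: "0 \<in> S" unfolding S_def using Wsub subspace_0 by auto
  obtain w0 where w0S: "w0 \<in> S" and w0min: "\<forall>w\<in>S. G w0 \<le> G w"
    using continuous_attains_inf[OF compact_eq_bounded_closed[THEN iffD2, OF conjI[OF Sbd Scl]], of G] S0
      continuous_on_subset[OF Gc] by blast
  have w0W: "w0 \<in> W" using w0S unfolding S_def by auto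
  have min: "G w0 \<le> G w" if "w \<in> W" for w
  proof (cases "G w \<le> G 0")
    case True then show ?thesis using w0min that unfolding S_def by auto
  next
    case False then show ?thesis using w0min S0 by force
  qed
  have stat: "(\<Sum>r\<in>UNIV. v$r * (exp (a$r + w0$r) - x'$r)) = 0" if vW: "v \<in> W" for v
  proof -
    define \<phi> where "\<phi> t = G (w0 + t *\<^sub>R v)" for t
    have "(\<phi> has_real_derivative (\<Sum>r\<in>UNIV. exp (a$r + (w0$r + 0 * v$r)) * v$r - x'$r * v$r)) (at 0)"
      unfolding \<phi>_def G_def by (auto intro!: derivative_eq_intros sum.cong simp: algebra_simps)
    moreover have "(\<Sum>r\<in>UNIV. exp (a$r + (w0$r + 0 * v$r)) * v$r - x'$r * v$r) = (\<Sum>r\<in>UNIV. v$r * (exp (a$r + w0$r) - x'$r))"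
      by (intro sum.cong) (simp_all add: algebra_simps)
    ultimately have D: "(\<phi> has_real_derivative (\<Sum>r\<in>UNIV. v$r * (exp (a$r + w0$r) - x'$r))) (at 0)"
      by simp
    have "\<forall>t. \<bar>0 - t\<bar> < 1 \<longrightarrow> \<phi> 0 \<le> \<phi> t"
      unfolding \<phi>_def using min w0W vW Wsub by (auto intro!: subspace_add subspace_mul)
    then show ?thesis using DERIV_local_min[OF D, of 1] by simp
  qed
  define x where "x = (\<chi> r. exp (a$r + w0$r))"
  have xpos: "positive_vec x" unfolding x_def positive_vec_def by simp
  have lnx: "lnv x - a = w0" unfolding x_def lnv_def by (simp add: vec_eq_iff)
  have orth: "(x - x') \<bullet> u = 0" if "u \<in> W" for u
    using stat[OF that] unfolding x_def inner_vec_def by (simp add: mult.commute)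
  obtain p z where p: "p \<in> span L" and z: "\<And>w. w \<in> span L \<Longrightarrow> orthogonal z w" and pz: "x - x' = p + z"
    using orthogonal_subspace_decomp_exists[of L "x - x'"] by metis
  have pL: "p \<in> L" using p span_subspace[OF order_refl span_superset L] by auto
  have zW: "z \<in> W" unfolding W_def using z span_superset by (auto simp: orthogonal_def)
  have "0 = (x - x') \<bullet> z" using orth[OF zW] by simp
  also have "\<dots> = p \<bullet> z + z \<bullet> z" by (simp add: pz inner_add_left)
  also have "p \<bullet> z = 0" using z[OF p] by (simp add: orthogonal_def inner_commute)
  finally have "z = 0" by simp
  then have "x - x' \<in> L" using pz pL by simp
  moreover have "\<forall>v\<in>L. (lnv x - a) \<bullet> v = 0" using lnx w0W unfolding W_def by simp
  ultimately show ?thesis using xpos by blast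
qed

lemma span_disjoint_Int:
  fixes A B :: "'a::euclidean_space set"
  assumes iAB: "independent (A \<union> B)" and d: "A \<inter> B = {}"
  shows "span A \<inter> span B \<subseteq> {0}"
proof -
  have fin: "finite (A \<union> B)" using iAB independent_imp_finite by blast
  have iA: "independent A" and iB: "independent B" using independent_mono[OF iAB] by auto
  have "dim {x + y |x y. x \<in> span A \<and> y \<in> span B} + dim (span A \<inter> span B) = dim (span A) + dim (span B)"
    by (rule dim_sums_Int) auto
  moreover have "{x + y |x y. x \<in> span A \<and> y \<in> span B} = span (A \<union> B)" by (simp add: span_Un)
  moreover have "dim (span (A \<union> B)) = card A + card B"
    using dim_span_eq_card_independent[OF iAB] card_Un_disjoint[of A B] fin d by auto
  moreover have "dim (span A) = card A" "dim (span B) = card B"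
    using dim_span_eq_card_independent iA iB by auto
  ultimately have "dim (span A \<inter> span B) = 0" by simp
  then show ?thesis by simp
qed

lemma rank_nullity_sub:
  fixes f :: "'a::euclidean_space \<Rightarrow> 'b::euclidean_space"
  assumes lf: "linear f" and R: "subspace R"
  shows "dim R = dim (f ` R) + dim {x\<in>R. f x = 0}"
proof -
  let ?N = "{x\<in>R. f x = 0}"
  obtain B0 where B0: "B0 \<subseteq> ?N" "independent B0" "?N \<subseteq> span B0" "card B0 = dim ?N"
    using basis_exists by blast
  have "B0 \<subseteq> R" using B0 by auto
  then obtain B where B: "B0 \<subseteq> B" "B \<subseteq> R" "independent B" "R \<subseteq> span B"
    using maximal_independent_subset_extend[of B0 R] B0(2) by metis
  have cB: "card B = dim R" using basis_card_eq_dim B by blast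
  have finB: "finite B" using B(3) independent_imp_finite by blast
  define C where "C = B - B0"
  have cC: "card C = card B - card B0" unfolding C_def using finB B(1) by (simp add: card_Diff_subset finite_subset)
  have cle: "card B0 \<le> card B" using finB B(1) card_mono by blast
  have iC: "independent C" unfolding C_def using independent_mono[OF B(3)] by auto
  have CB0: "C \<union> B0 = B" "C \<inter> B0 = {}" unfolding C_def using B(1) by auto
  have disj: "span C \<inter> span B0 \<subseteq> {0}"
    by (rule span_disjoint_Int) (use CB0 B(3) in auto)
  have spR: "span R = R" using R by (simp add: span_eq_iff)
  have CR: "span C \<subseteq> R" using B(2) spR span_mono unfolding C_def by blast
  have inj: "inj_on f (span C)"
  proof (rule inj_onI)
    fix u v assume u: "u \<in> span C" and v: "v \<in> span C" and e: "f u = f v"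
    have "u - v \<in> span C" using u v span_diff by blast
    moreover have "f (u - v) = 0" using e linear_diff[OF lf] by simp
    ultimately have "u - v \<in> ?N" using CR by auto
    then have "u - v \<in> span B0" using B0(3) by auto
    with \<open>u - v \<in> span C\<close> disj have "u - v = 0" by auto
    then show "u = v" by simp
  qed
  have dC: "dim (f ` C) = card C"
    using eucl.dim_image_eq[OF lf inj] dim_eq_card_independent[OF iC] by simp
  have img: "f ` R = span (f ` C)"
  proof
    show "f ` R \<subseteq> span (f ` C)"
    proof
      fix z assume "z \<in> f ` R"
      then obtain x where x: "x \<in> R" "z = f x" by auto
      have "x \<in> span B" using x B(4) by auto
      then have "z \<in> span (f ` B)" using x linear_span_image[OF lf, of B] by auto
      moreover have "f ` B \<subseteq> span (f ` C)"
      proof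
        fix w assume "w \<in> f ` B"
        then obtain b where b: "b \<in> B" "w = f b" by auto
        show "w \<in> span (f ` C)"
        proof (cases "b \<in> C")
          case True then show ?thesis using b by (auto intro: span_base)
        next
          case False then have "b \<in> B0" using b CB0 by auto
          then have "f b = 0" using B0(1) by auto
          then show ?thesis using b span_0 by simp
        qed
      qed
      ultimately show "z \<in> span (f ` C)" using span_mono[of "f ` B" "span (f ` C)"] span_span by blast
    qed
  next
    show "span (f ` C) \<subseteq> f ` R" using linear_span_image[OF lf, of C] CR by auto
  qed
  have "dim (f ` R) = card C" using img dC by simp
  then show ?thesis using cB cC cle B0(4) by simp
qed

lemma extend_functional:
  fixes U :: "('a::euclidean_space) set" and \<psi> :: "'a \<Rightarrow> real"
  assumes U: "subspace U"
    and add: "\<And>u v. u\<in>U \<Longrightarrow> v\<in>U \<Longrightarrow> \<psi> (u+v) = \<psi> u + \<psi> v"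
    and hom: "\<And>c u. u\<in>U \<Longrightarrow> \<psi> (c *\<^sub>R u) = c * \<psi> u"
  shows "\<exists>a. \<forall>u\<in>U. a \<bullet> u = \<psi> u"
proof -
  obtain B where BU: "B \<subseteq> U" and orth: "pairwise orthogonal B" and nrm: "\<And>x. x \<in> B \<Longrightarrow> norm x = 1"
    and iB: "independent B" and sp: "span B = U"
    using orthonormal_basis_subspace[OF U] by metis
  have finB: "finite B" using iB independent_imp_finite by blast
  define a where "a = (\<Sum>b\<in>B. \<psi> b *\<^sub>R b)"
  have psi0: "\<psi> 0 = 0" using hom[of 0 0] U subspace_0 by auto
  have psisum: "\<psi> (\<Sum>b\<in>F. c b *\<^sub>R b) = (\<Sum>b\<in>F. c b * \<psi> b)" if "F \<subseteq> B" for F c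
  proof -
    have "finite F" using that finB finite_subset by blast
    then show ?thesis using that
    proof (induction F rule: finite_induct)
      case empty then show ?case using psi0 by simp
    next
      case (insert x F)
      have xU: "x \<in> U" using insert BU by auto
      have "(\<Sum>b\<in>F. c b *\<^sub>R b) \<in> U" using insert BU U
        by (intro subspace_sum) (auto intro: subspace_mul)
      then show ?case using insert xU by (simp add: add hom subspace_mul U)
    qed
  qed
  have ip: "(\<Sum>b'\<in>B. c b' * (b \<bullet> b')) = c b" if b: "b \<in> B" for b c
  proof -
    have "(\<Sum>b'\<in>B. c b' * (b \<bullet> b')) = c b * (b \<bullet> b) + (\<Sum>b'\<in>B - {b}. c b' * (b \<bullet> b'))"
      using finB b by (simp add: sum.remove)
    also have "(\<Sum>b'\<in>B - {b}. c b' * (b \<bullet> b')) = 0"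
      using orth b unfolding pairwise_def orthogonal_def by (intro sum.neutral) auto
    also have "b \<bullet> b = 1" using nrm[OF b] by (simp add: norm_eq_1)
    finally show ?thesis by simp
  qed
  have "a \<bullet> u = \<psi> u" if u: "u \<in> U" for u
  proof -
    obtain c where c: "u = (\<Sum>b\<in>B. c b *\<^sub>R b)" using u sp span_finite[OF finB] by auto
    have "a \<bullet> u = (\<Sum>b\<in>B. \<psi> b * (b \<bullet> u))"
      unfolding a_def by (simp add: inner_sum_left)
    also have "\<dots> = (\<Sum>b\<in>B. \<psi> b * (\<Sum>b'\<in>B. c b' * (b \<bullet> b')))"
      unfolding c by (simp add: inner_sum_right)
    also have "\<dots> = (\<Sum>b\<in>B. \<psi> b * c b)" by (intro sum.cong) (auto simp: ip)
    also have "\<dots> = \<psi> u" using psisum[of B c] c by (simp add: mult.commute)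
    finally show ?thesis .
  qed
  then show ?thesis by blast
qed

definition Pr :: "'v set \<Rightarrow> real^'v::finite \<Rightarrow> real^'v" where
  "Pr S \<nu> = (\<chi> i. if i \<in> S then \<nu>$i else 0)"

definition ind2 :: "'v::finite \<Rightarrow> 'v \<Rightarrow> real^'v" where
  "ind2 i i' = (\<chi> j. (if j = i then 1 else 0) - (if j = i' then 1 else 0))"

lemma sum_ind2:
  fixes S :: "'v::finite set" and f :: "'v \<Rightarrow> 'a::real_vector"
  assumes "i \<in> S" "i' \<in> S"
  shows "(\<Sum>j\<in>S. (ind2 i i' $ j) *\<^sub>R f j) = f i - f i'"
  using assms by (simp add: ind2_def scaleR_diff_left sum_subtractf if_distrib[of "\<lambda>x. x *\<^sub>R _"] cong: if_cong)

lemma sum_ind2_0: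
  fixes S :: "'v::finite set"
  assumes "i \<in> S" "i' \<in> S"
  shows "(\<Sum>j\<in>S. ind2 i i' $ j) = 0"
  using assms by (simp add: ind2_def sum_subtractf)

lemma dims_defic0:
  fixes E :: "('v::finite \<times> 'v) set" and y :: "'v \<Rightarrow> real^'n"
  assumes nl: "\<forall>(i,i')\<in>E. i\<noteq>i'" and ne: "E \<noteq> {}"
    and K: "kin_space (verts E) E k y = L_space y E"
  shows "card (sources E) = dim (L_space y E) + dim {x. (\<forall>i. i \<notin> sources E \<longrightarrow> x$i = 0) \<and> Gm E k y x = 0}"
    and "card (sources E) = dim (L_space y E) + 1 + defic y E"
proof -
  let ?s = "sources E"
  define R where "R = {x::real^'v. \<forall>i. i \<notin> ?s \<longrightarrow> x$i = 0}"
  obtain i0 where i0: "i0 \<in> ?s" using ne unfolding sources_def by auto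
  have Rsub: "subspace R" unfolding R_def subspace_def by auto
  have dR: "dim R = card ?s"
  proof -
    have "vec.dim R = card ?s" unfolding R_def by (rule dim_substandard_cart)
    then show ?thesis unfolding dim_vec_eq .
  qed
  define \<sigma> where "\<sigma> x = (\<Sum>i\<in>?s. x$i)" for x :: "real^'v"
  have l\<sigma>: "linear \<sigma>" unfolding \<sigma>_def by (rule linearI) (simp_all add: sum.distrib sum_distrib_left)
  have \<sigma>R: "\<sigma> ` R = UNIV"
  proof -
    have "r \<in> \<sigma> ` R" for r
    proof
      show "(\<chi> i. if i = i0 then r else 0) \<in> R" unfolding R_def using i0 by auto
      show "r = \<sigma> (\<chi> i. if i = i0 then r else 0)" unfolding \<sigma>_def using i0 by simp
    qed
    then show ?thesis by auto
  qed
  define R0 where "R0 = {x\<in>R. \<sigma> x = 0}"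
  have R0sub: "subspace R0" unfolding R0_def subspace_def using Rsub l\<sigma>
    by (auto simp: subspace_def linear_add linear_scale linear_0)
  have dR0: "dim R = 1 + dim R0"
    using rank_nullity_sub[OF l\<sigma> Rsub] \<sigma>R unfolding R0_def by simp
  define Dm where "Dm x = (\<Sum>i\<in>?s. x$i *\<^sub>R y i)" for x :: "real^'v"
  have lD: "linear Dm" unfolding Dm_def
    by (rule linearI) (simp_all add: sum.distrib scaleR_add_left scaleR_sum_right)
  have kerD: "{x\<in>R0. Dm x = 0} = defic_kernel y E"
    unfolding R0_def R_def defic_kernel_def Dm_def \<sigma>_def by auto
  have imD: "Dm ` R0 = L_space y E"
  proof
    show "Dm ` R0 \<subseteq> L_space y E"
    proof
      fix z assume "z \<in> Dm ` R0"
      then obtain x where x: "x \<in> R0" "z = Dm x" by auto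
      have "(\<Sum>i\<in>?s. x$i *\<^sub>R y i0) = 0" using x unfolding R0_def \<sigma>_def by (simp add: scaleR_sum_left[symmetric])
      then have "z = (\<Sum>i\<in>?s. x$i *\<^sub>R (y i - y i0))"
        using x unfolding Dm_def by (simp add: scaleR_diff_right sum_subtractf)
      also have "\<dots> \<in> L_space y E" unfolding L_space_def
        using i0 by (intro span_sum span_mul span_base) auto
      finally show "z \<in> L_space y E" .
    qed
  next
    have "subspace (Dm ` R0)" by (rule linear_subspace_image[OF lD R0sub])
    moreover have "{y i - y i' | i i'. i \<in> ?s \<and> i' \<in> ?s} \<subseteq> Dm ` R0"
    proof
      fix z assume "z \<in> {y i - y i' | i i'. i \<in> ?s \<and> i' \<in> ?s}"
      then obtain i i' where ii: "i \<in> ?s" "i' \<in> ?s" "z = y i - y i'" by auto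
      have "ind2 i i' \<in> R0" unfolding R0_def R_def \<sigma>_def using ii sum_ind2_0[of i ?s i']
        by (auto simp: ind2_def)
      moreover have "Dm (ind2 i i') = z" unfolding Dm_def using ii sum_ind2 by metis
      ultimately show "z \<in> Dm ` R0" by force
    qed
    ultimately show "L_space y E \<subseteq> Dm ` R0" unfolding L_space_def by (rule span_minimal[rotated])
  qed
  have dR0': "dim R0 = dim (L_space y E) + defic y E"
    using rank_nullity_sub[OF lD R0sub] kerD imD unfolding defic_def by simp
  show "card ?s = dim (L_space y E) + 1 + defic y E" using dR dR0 dR0' by simp
  have imG: "Gm E k y ` R = L_space y E"
  proof -
    have "Gm E k y ` R = range (Gm E k y)"
    proof
      show "range (Gm E k y) \<subseteq> Gm E k y ` R"
      proof
        fix z assume "z \<in> range (Gm E k y)"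
        then obtain x where "z = Gm E k y x" by auto
        moreover have "Gm E k y x = Gm E k y (Pr ?s x)" by (intro Gm_src) (simp add: Pr_def)
        moreover have "Pr ?s x \<in> R" unfolding R_def Pr_def by simp
        ultimately show "z \<in> Gm E k y ` R" by blast
      qed
    qed auto
    also have "\<dots> = L_space y E" using K gam_eq'[OF nl, of k y] unfolding kin_space_def by simp
    finally show ?thesis .
  qed
  show "card ?s = dim (L_space y E) + dim {x. (\<forall>i. i \<notin> sources E \<longrightarrow> x$i = 0) \<and> Gm E k y x = 0}"
    using rank_nullity_sub[OF Gm_linear[of E k y] Rsub] imG dR unfolding R_def by simp
qed

lemma layer:
  fixes cs :: "real list" and q w :: "'v \<Rightarrow> real" and S :: "'v set" and F :: "real \<Rightarrow> real"
  assumes fin: "finite S" and srt: "sorted_wrt (>) cs" and qs: "q ` S = set cs"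
    and w0: "(\<Sum>i\<in>S. w i) = 0" and n: "length cs \<ge> 1"
  shows "(\<Sum>i\<in>S. w i * F (q i)) =
    (\<Sum>p<length cs - 1. (\<Sum>i\<in>S. if q i \<ge> cs!p then w i else 0) * (F (cs!p) - F (cs!(p+1))))"
    and "\<And>p. p < length cs \<Longrightarrow> (\<Sum>m=1..p+1. (\<Sum>i\<in>{i\<in>S. q i = cs!(m-1)}. w i)) = (\<Sum>i\<in>S. if q i \<ge> cs!p then w i else 0)"
proof -
  let ?n = "length cs"
  have le_iff: "cs!r \<le> cs!p \<longleftrightarrow> p \<le> r" if "r < ?n" "p < ?n" for r p
  proof
    assume "cs!r \<le> cs!p"
    show "p \<le> r"
    proof (rule ccontr)
      assume "\<not> p \<le> r"
      then have "cs!r > cs!p" using sorted_wrt_nth_less[OF srt, of r p] that by auto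
      with \<open>cs!r \<le> cs!p\<close> show False by simp
    qed
  next
    assume "p \<le> r"
    then show "cs!r \<le> cs!p"
    proof (cases "p = r")
      case False
      then show ?thesis using sorted_wrt_nth_less[OF srt, of p r] that \<open>p \<le> r\<close> by auto
    qed simp
  qed
  have eq_iff: "cs!r = cs!p \<longleftrightarrow> p = r" if "r < ?n" "p < ?n" for r p
    using le_iff[OF that] le_iff[OF that(2,1)] by (metis order_antisym order_refl)
  have idx: "\<exists>r<?n. q i = cs!r" if "i \<in> S" for i
    using qs that by (metis imageI in_set_conv_nth)
  have ptw: "(\<Sum>p<?n-1. (if q i \<ge> cs!p then 1 else 0) * (F (cs!p) - F (cs!(p+1)))) = F (q i) - F (cs!(?n-1))"
    if i: "i \<in> S" for i
  proof -
    obtain r where r: "r < ?n" "q i = cs!r" using idx[OF i] by blast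
    have "(\<Sum>p<?n-1. (if q i \<ge> cs!p then 1 else 0) * (F (cs!p) - F (cs!(p+1))))
        = (\<Sum>p\<in>{r..<?n-1}. F (cs!p) - F (cs!(p+1)))"
    proof -
      have "(\<Sum>p<?n-1. (if q i \<ge> cs!p then 1 else 0) * (F (cs!p) - F (cs!(p+1))))
          = (\<Sum>p<?n-1. if r \<le> p then F (cs!p) - F (cs!(p+1)) else 0)"
        using r le_iff by (intro sum.cong) auto
      also have "\<dots> = (\<Sum>p\<in>{p\<in>{..<?n-1}. r \<le> p}. F (cs!p) - F (cs!(p+1)))"
        by (rule sum.inter_filter[symmetric]) simp
      also have "{p\<in>{..<?n-1}. r \<le> p} = {r..<?n-1}" by auto
      finally show ?thesis .
    qed
    also have "\<dots> = F (cs!r) - F (cs!(?n-1))"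
    proof -
      have "(\<Sum>p\<in>{r..<?n-1}. F (cs!p) - F (cs!(p+1))) = (\<Sum>p\<in>{r..<?n-1}. (\<lambda>p. - F (cs!p)) (Suc p) - (\<lambda>p. - F (cs!p)) p)"
        by (intro sum.cong) auto
      also have "\<dots> = - F (cs!(?n-1)) - (- F (cs!r))" using r by (intro sum_Suc_diff') auto
      finally show ?thesis by simp
    qed
    finally show ?thesis using r by simp
  qed
  have "(\<Sum>p<?n-1. (\<Sum>i\<in>S. if q i \<ge> cs!p then w i else 0) * (F (cs!p) - F (cs!(p+1))))
      = (\<Sum>p<?n-1. \<Sum>i\<in>S. w i * ((if q i \<ge> cs!p then 1 else 0) * (F (cs!p) - F (cs!(p+1)))))"
    by (intro sum.cong refl) (auto simp: sum_distrib_right intro!: sum.cong)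
  also have "\<dots> = (\<Sum>i\<in>S. \<Sum>p<?n-1. w i * ((if q i \<ge> cs!p then 1 else 0) * (F (cs!p) - F (cs!(p+1)))))"
    by (rule sum.swap)
  also have "\<dots> = (\<Sum>i\<in>S. w i * (F (q i) - F (cs!(?n-1))))"
    by (intro sum.cong refl) (simp only: sum_distrib_left[symmetric] ptw)
  also have "\<dots> = (\<Sum>i\<in>S. w i * F (q i)) - (\<Sum>i\<in>S. w i) * F (cs!(?n-1))"
    by (simp add: algebra_simps sum_subtractf sum_distrib_right)
  finally show "(\<Sum>i\<in>S. w i * F (q i)) =
    (\<Sum>p<length cs - 1. (\<Sum>i\<in>S. if q i \<ge> cs!p then w i else 0) * (F (cs!p) - F (cs!(p+1))))"
    using w0 by simp
  fix p assume p: "p < ?n"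
  have "(\<Sum>m=1..p+1. (\<Sum>i\<in>{i\<in>S. q i = cs!(m-1)}. w i)) = (\<Sum>r\<le>p. (\<Sum>i\<in>{i\<in>S. q i = cs!r}. w i))"
  proof -
    have "(\<Sum>m=1..p+1. (\<Sum>i\<in>{i\<in>S. q i = cs!(m-1)}. w i)) = (\<Sum>r\<in>{0..p}. (\<Sum>i\<in>{i\<in>S. q i = cs!(Suc r - 1)}. w i))"
      by (subst sum.shift_bounds_cl_Suc_ivl[symmetric]) simp
    then show ?thesis by (simp add: atLeast0AtMost)
  qed
  also have "\<dots> = (\<Sum>r\<le>p. \<Sum>i\<in>S. if q i = cs!r then w i else 0)"
    using fin by (simp add: sum.inter_filter)
  also have "\<dots> = (\<Sum>i\<in>S. \<Sum>r\<le>p. if q i = cs!r then w i else 0)" by (rule sum.swap)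
  also have "\<dots> = (\<Sum>i\<in>S. if q i \<ge> cs!p then w i else 0)"
  proof (intro sum.cong refl)
    fix i assume i: "i \<in> S"
    obtain r0 where r0: "r0 < ?n" "q i = cs!r0" using idx[OF i] by blast
    have "(\<Sum>r\<le>p. if q i = cs!r then w i else 0) = (\<Sum>r\<le>p. if r = r0 then w i else 0)"
    proof (intro sum.cong refl)
      fix r assume "r \<in> {..p}"
      then have "r < ?n" using p by auto
      then show "(if q i = cs!r then w i else 0) = (if r = r0 then w i else 0)"
        using eq_iff[OF r0(1) \<open>r < ?n\<close>] r0 by auto
    qed
    also have "\<dots> = (if r0 \<le> p then w i else 0)" by (simp add: sum.delta)
    also have "\<dots> = (if q i \<ge> cs!p then w i else 0)" using le_iff[OF p r0(1)] r0 by simp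
    finally show "(\<Sum>r\<le>p. if q i = cs!r then w i else 0) = (if q i \<ge> cs!p then w i else 0)" .
  qed
  finally show "(\<Sum>m=1..p+1. (\<Sum>i\<in>{i\<in>S. q i = cs!(m-1)}. w i)) = (\<Sum>i\<in>S. if q i \<ge> cs!p then w i else 0)" .
qed

lemma delta_mono:
  fixes c c' u v :: real
  assumes "-1 \<le> c'" "c' < c" "c \<le> 1" "-1 < u" "u < v" "v < 1"
  shows "ln (1 + c* u) - ln (1 + c'* u) < ln (1 + c* v) - ln (1 + c'* v)"
proof -
  have pos: "1 + d * z > 0" if "-1 \<le> d" "d \<le> 1" "-1 < z" "z < 1" for d z :: real
  proof -
    have "\<bar>d * z\<bar> < 1"
    proof -
      have "\<bar>d * z\<bar> = \<bar>d\<bar> * \<bar>z\<bar>" by (simp add: abs_mult)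
      also have "\<dots> \<le> 1 * \<bar>z\<bar>" using that by (intro mult_right_mono) auto
      also have "\<dots> < 1" using that by auto
      finally show ?thesis .
    qed
    then show ?thesis by linarith
  qed
  have p1: "1 + c* u > 0" "1 + c'* u > 0" "1 + c* v > 0" "1 + c'* v > 0"
    using assms by (auto intro!: pos)
  have "(1 + c* u) * (1 + c'* v) < (1 + c* v) * (1 + c'* u)"
  proof -
    have "(1 + c* v) * (1 + c'* u) - (1 + c* u) * (1 + c'* v) = (c - c') * (v - u)" by (simp add: algebra_simps)
    also have "\<dots> > 0" using assms by simp
    finally show ?thesis by simp
  qed
  then have "ln ((1 + c* u) * (1 + c'* v)) < ln ((1 + c* v) * (1 + c'* u))"
    using p1 by (simp add: ln_less_cancel_iff)
  then show ?thesis using p1 by (simp add: ln_mult)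
qed

lemma ln_small_right: "\<exists>u. 0 \<le> u \<and> u < 1 \<and> ln (1 - u) < - (Z::real)"
proof -
  define u where "u = 1 - min 1 (exp (- Z - 1))"
  have "1 - u = min 1 (exp (- Z - 1))" unfolding u_def by simp
  moreover have "ln (min 1 (exp (- Z - 1))) \<le> - Z - 1"
    by (metis exp_gt_zero ln_exp ln_le_cancel_iff min.cobounded2 min_def zero_less_one)
  moreover have h1: "0 < min 1 (exp (- Z - 1))" by simp
  moreover have h2: "min 1 (exp (- Z - 1)) \<le> 1" by simp
  moreover have "ln (1 - u) = ln (min 1 (exp (- Z - 1)))" unfolding u_def by simp
  ultimately have "0 \<le> u \<and> u < 1 \<and> ln (1 - u) < - Z" by linarith
  then show ?thesis by blast
qed

lemma ln_small_left: "\<exists>u. -1 < u \<and> u \<le> 0 \<and> ln (1 + u) < - (Z::real)"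
proof -
  obtain u where "0 \<le> u \<and> u < 1 \<and> ln (1 - u) < - Z" using ln_small_right by blast
  then show ?thesis by (intro exI[of _ "-u"]) auto
qed

lemma Pclos_iff:
  fixes E :: "('v::finite \<times> 'v) set"
  assumes nl: "\<forall>(i,i')\<in>E. i\<noteq>i'"
  shows "\<xi> \<in> Pclos E k y \<longleftrightarrow> (\<forall>i. i \<notin> sources E \<longrightarrow> \<xi>$i = 0) \<and> (\<forall>i\<in>sources E. \<xi>$i \<ge> 0) \<and>
       Gm E k y \<xi> = 0 \<and> (\<Sum>i\<in>sources E. \<xi>$i) = 1"
  unfolding Pclos_def using gam_eq'[OF nl, of k y] by simp

lemma endpoint_zero:
  fixes E :: "('v::finite \<times> 'v) set" and y :: "'v \<Rightarrow> real^'n"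
  assumes nl: "\<forall>(i,i')\<in>E. i\<noteq>i'" and seg: "Pclos E k y = closed_segment e1 e2" and ne: "e1 \<noteq> e2"
  shows "\<exists>i\<in>sources E. e2$i = 0"
proof (rule ccontr)
  let ?s = "sources E"
  assume nz: "\<not> (\<exists>i\<in>?s. e2$i = 0)"
  have e1P: "e1 \<in> Pclos E k y" and e2P: "e2 \<in> Pclos E k y" using seg by auto
  note e1 = e1P[unfolded Pclos_iff[OF nl]] and e2 = e2P[unfolded Pclos_iff[OF nl]]
  have pos2: "\<forall>i\<in>?s. e2$i > 0" using e2 nz by force
  have sne: "?s \<noteq> {}" using e1 by auto
  have fin: "finite ?s" by simp
  define \<epsilon> where "\<epsilon> = Min ((\<lambda>i. e2$i / (e1$i + 1)) ` ?s)"
  have \<epsilon>pos: "\<epsilon> > 0" unfolding \<epsilon>_def using sne pos2 e1 by (subst Min_gr_iff) (auto intro!: divide_pos_pos)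
  have \<epsilon>le: "\<epsilon> \<le> e2$i / (e1$i + 1)" if "i \<in> ?s" for i unfolding \<epsilon>_def using that by simp
  define w where "w = e2 + \<epsilon> *\<^sub>R (e2 - e1)"
  have "w \<in> Pclos E k y" unfolding Pclos_iff[OF nl]
  proof (intro conjI)
    show "\<forall>i. i \<notin> ?s \<longrightarrow> w$i = 0" unfolding w_def using e1 e2 by simp
    show "\<forall>i\<in>?s. 0 \<le> w$i"
    proof
      fix i assume i: "i \<in> ?s"
      have "e1$i + 1 > 0" using e1 i by (simp add: add_nonneg_pos)
      then have "\<epsilon> * (e1$i + 1) \<le> e2$i" using \<epsilon>le[OF i] by (simp add: le_divide_eq)
      then have "\<epsilon> * e1$i \<le> e2$i" using \<epsilon>pos by (simp add: algebra_simps)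
      moreover have "0 \<le> \<epsilon> * e2$i" using \<epsilon>pos e2 i by simp
      ultimately show "0 \<le> w$i" unfolding w_def by (simp add: algebra_simps)
    qed
    show "Gm E k y w = 0" unfolding w_def using e1 e2
      by (simp add: linear_add[OF Gm_linear] linear_scale[OF Gm_linear] linear_diff[OF Gm_linear])
    show "(\<Sum>i\<in>?s. w$i) = 1" unfolding w_def using e1 e2
      by (simp add: sum.distrib sum_distrib_left[symmetric] sum_subtractf)
  qed
  then obtain u where u: "0 \<le> u" "u \<le> 1" "w = (1 - u) *\<^sub>R e1 + u *\<^sub>R e2"
    using seg unfolding closed_segment_def by auto
  have "(1 + \<epsilon> - u) *\<^sub>R (e2 - e1) = 0" using u(3) unfolding w_def by (simp add: algebra_simps)
  then have "1 + \<epsilon> - u = 0" using ne by simp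
  then show False using u \<epsilon>pos by simp
qed

lemma key0:
  fixes E :: "('v::finite \<times> 'v) set" and y :: "'v \<Rightarrow> real^'n"
  assumes nl: "\<forall>(i,i')\<in>E. i\<noteq>i'" and ne: "E \<noteq> {}"
    and K: "kin_space (verts E) E k y = L_space y E" and d0: "defic y E = 0"
    and pos0: "\<forall>i\<in>sources E. \<xi>0$i > 0" and ker0: "Gm E k y \<xi>0 = 0"
    and pos: "\<forall>i\<in>sources E. \<nu>$i > 0" and ker: "Gm E k y \<nu> = 0"
  shows "\<exists>c>0. \<forall>i\<in>sources E. \<nu>$i = c * \<xi>0$i"
proof -
  let ?s = "sources E"
  define N where "N = {x. (\<forall>i. i \<notin> ?s \<longrightarrow> x$i = 0) \<and> Gm E k y x = 0}"
  have dN: "dim N = 1" using dims_defic0[OF nl ne K] d0 unfolding N_def by simp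
  have Nsub: "subspace N" unfolding N_def subspace_def
    by (simp add: linear_add[OF Gm_linear] linear_scale[OF Gm_linear] linear_0[OF Gm_linear])
  obtain i0 where i0: "i0 \<in> ?s" using ne unfolding sources_def by auto
  have P0: "Pr ?s \<xi>0 \<in> N" unfolding N_def Pr_def
    using ker0 Gm_src[of E "Pr ?s \<xi>0" \<xi>0 k y] by (auto simp: Pr_def)
  have P0ne: "Pr ?s \<xi>0 \<noteq> 0" using pos0 i0 unfolding Pr_def by (auto simp: vec_eq_iff intro!: exI[of _ i0])
  have "span {Pr ?s \<xi>0} = N"
    by (rule subspace_dim_equal) (use P0 P0ne dN Nsub in \<open>auto intro: span_minimal subspace_span span_subspace_induct\<close>)
  moreover have "Pr ?s \<nu> \<in> N" unfolding N_def
    using ker Gm_src[of E "Pr ?s \<nu>" \<nu> k y] by (auto simp: Pr_def)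
  ultimately obtain c where c: "Pr ?s \<nu> = c *\<^sub>R Pr ?s \<xi>0" by (auto simp: span_singleton)
  have ci: "\<nu>$i = c * \<xi>0$i" if "i \<in> ?s" for i
  proof -
    have "(Pr ?s \<nu>)$i = (c *\<^sub>R Pr ?s \<xi>0)$i" using c by simp
    then show ?thesis using that by (simp add: Pr_def)
  qed
  have "c > 0" using ci[OF i0] pos i0 pos0 by (metis zero_less_mult_pos2)
  then show ?thesis using ci by blast
qed

lemma H_props:
  fixes s :: "'v set" and q bb :: "'v \<Rightarrow> real" and C0 :: real and cs :: "real list"
  assumes fin: "finite s" and srt: "sorted_wrt (>) cs" and qs: "q ` s = set cs" and bsum: "(\<Sum>i\<in>s. bb i) = 0"
    and n2: "length cs \<ge> 2" and c0: "cs!0 = 1" and cl: "cs!(length cs - 1) = -1"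
    and Anonneg: "\<forall>p<length cs - 1. (\<Sum>m=1..p+1. (\<Sum>i\<in>{i\<in>s. q i = cs!(m-1)}. bb i)) \<ge> 0"
    and tbprod: "(\<Sum>i\<in>{i\<in>s. q i = cs!(1-1)}. bb i) * (\<Sum>i\<in>{i\<in>s. q i = cs!(length cs - 1)}. bb i) < 0"
  shows "\<And>u v. -1 < u \<Longrightarrow> u < v \<Longrightarrow> v < 1 \<Longrightarrow> (\<Sum>i\<in>s. bb i * ln (1 + q i * u)) < (\<Sum>i\<in>s. bb i * ln (1 + q i * v))"
    and "\<exists>u. -1 < u \<and> u < 1 \<and> C0 + (\<Sum>i\<in>s. bb i * ln (1 + q i * u)) = 0"
proof -
  let ?n = "length cs"
  define tb where "tb m = (\<Sum>i\<in>{i\<in>s. q i = cs!(m-1)}. bb i)" for m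
  define A where "A p = (\<Sum>i\<in>s. if q i \<ge> cs!p then bb i else 0)" for p
  define H where "H u = (\<Sum>i\<in>s. bb i * ln (1 + q i * u))" for u
  define \<Delta> where "\<Delta> p u = ln (1 + cs!p * u) - ln (1 + cs!(p+1) * u)" for p u
  have n1: "?n \<ge> 1" using n2 by simp
  have tbA: "(\<Sum>m=1..p+1. tb m) = A p" if "p < ?n" for p
    unfolding tb_def A_def using layer(2)[OF fin srt qs bsum n1 that] .
  have HA: "H u = (\<Sum>p<?n-1. A p * \<Delta> p u)" for u
    unfolding H_def A_def \<Delta>_def using layer(1)[OF fin srt qs bsum n1, of "\<lambda>c. ln (1 + c * u)"] by simp
  have cstrict: "cs!p' < cs!p" if "p < p'" "p' < ?n" for p p'
    using sorted_wrt_nth_less[OF srt that] by simp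
  have clast_le: "cs!(?n-1) \<le> cs!r" if "r < ?n" for r
  proof (cases "r = ?n - 1")
    case False then have "r < ?n - 1" using that by linarith
    moreover have "?n - 1 < ?n" using that by simp
    ultimately have "cs!(?n-1) < cs!r" by (rule cstrict)
    then show ?thesis by simp
  qed simp
  have crange: "-1 \<le> cs!p \<and> cs!p \<le> 1" if "p < ?n" for p
  proof
    show "cs!p \<le> 1" using c0 cstrict[of 0 p] that by (cases "p = 0") auto
    show "-1 \<le> cs!p"
    proof (cases "p = ?n - 1")
      case True then show ?thesis using cl by simp
    next
      case False then have "p < ?n - 1" using that by linarith
      moreover have "?n - 1 < ?n" using that by simp
      ultimately have "cs!(?n-1) < cs!p" by (rule cstrict)
      then show ?thesis using cl by simp
    qed
  qed
  have Ann: "A p \<ge> 0" if "p < ?n - 1" for p using Anonneg that tbA[of p] unfolding tb_def by auto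
  have csne: "cs \<noteq> []" using n1 by auto
  have A0: "A 0 = tb 1" using tbA[of 0] csne by simp
  have tbprod': "tb 1 * tb ?n < 0" using tbprod unfolding tb_def by simp
  have A0pos: "A 0 > 0"
  proof -
    have "A 0 \<ge> 0" using Ann[of 0] n2 by simp
    moreover have "A 0 \<noteq> 0" using A0 tbprod' by auto
    ultimately show ?thesis by simp
  qed
  have tbn: "tb ?n < 0" using tbprod' A0 A0pos by (simp add: mult_less_0_iff)
  have Alast: "A (?n - 1) = 0"
  proof -
    have "A (?n - 1) = (\<Sum>i\<in>s. bb i)" unfolding A_def
    proof (intro sum.cong refl)
      fix i assume "i \<in> s"
      then obtain r where r: "r < ?n" "q i = cs!r" using qs by (metis imageI in_set_conv_nth)
      have "cs!(?n-1) \<le> cs!r" using clast_le r by simp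
      then show "(if q i \<ge> cs!(?n-1) then bb i else 0) = bb i" using r by simp
    qed
    then show ?thesis using bsum by simp
  qed
  have Apen: "A (?n - 2) = - tb ?n"
  proof -
    have e: "?n - 1 + 1 = ?n" using n1 by simp
    have "?n - 1 < ?n" using csne by simp
    from tbA[OF this] have "(\<Sum>m=1..?n-1+1. tb m) = A (?n-1)" .
    then have "(\<Sum>m=1..?n. tb m) = 0" using Alast by (simp only: e)
    moreover have "(\<Sum>m=1..?n. tb m) = (\<Sum>m=1..?n-1. tb m) + tb ?n"
    proof -
      have e2: "?n = Suc (?n - 1)" using n1 by simp
      have "(\<Sum>m=1..Suc (?n-1). tb m) = (\<Sum>m=1..?n-1. tb m) + tb (Suc (?n-1))" by simp
      then show ?thesis by (simp only: e2[symmetric])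
    qed
    moreover have "(\<Sum>m=1..?n-1. tb m) = A (?n - 2)"
    proof -
      have e3: "?n - 2 + 1 = ?n - 1" using n2 by simp
      have "?n - 2 < ?n" using n2 by simp
      from tbA[OF this] show ?thesis by (simp only: e3)
    qed
    ultimately show ?thesis by simp
  qed
  have Apenpos: "A (?n - 2) > 0" using Apen tbn by simp
  have \<Delta>mono: "\<Delta> p u < \<Delta> p v" if "p < ?n - 1" "-1 < u" "u < v" "v < 1" for p u v
    unfolding \<Delta>_def
    by (rule delta_mono) (use that crange[of p] crange[of "p+1"] cstrict[of p "p+1"] in auto)
  have \<Delta>0: "\<Delta> p 0 = 0" for p unfolding \<Delta>_def by simp
  have \<Delta>pos: "\<Delta> p u \<ge> 0" if "p < ?n - 1" "0 \<le> u" "u < 1" for p u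
    using \<Delta>mono[of p 0 u] that \<Delta>0 by (cases "u = 0") auto
  have \<Delta>neg: "\<Delta> p u \<le> 0" if "p < ?n - 1" "-1 < u" "u \<le> 0" for p u
    using \<Delta>mono[of p u 0] that \<Delta>0 by (cases "u = 0") auto
  have mono: "H u < H v" if "-1 < u" "u < v" "v < 1" for u v
    unfolding HA
  proof (rule sum_strict_mono_ex1)
    show "\<forall>p\<in>{..<?n-1}. A p * \<Delta> p u \<le> A p * \<Delta> p v"
    proof
      fix p assume "p \<in> {..<?n-1}"
      then have "\<Delta> p u \<le> \<Delta> p v" "A p \<ge> 0" using \<Delta>mono[of p u v] that Ann by auto
      then show "A p * \<Delta> p u \<le> A p * \<Delta> p v" by (rule mult_left_mono)
    qed
    show "\<exists>p\<in>{..<?n-1}. A p * \<Delta> p u < A p * \<Delta> p v"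
      using \<Delta>mono[of 0 u v] that A0pos n2 by (intro bexI[of _ 0] mult_strict_left_mono) auto
  qed simp
  then show "\<And>u v. -1 < u \<Longrightarrow> u < v \<Longrightarrow> v < 1 \<Longrightarrow> (\<Sum>i\<in>s. bb i * ln (1 + q i * u)) < (\<Sum>i\<in>s. bb i * ln (1 + q i * v))"
    unfolding H_def by blast
  have qrange: "-1 \<le> q i \<and> q i \<le> 1" if "i \<in> s" for i
    using that qs crange by (metis imageI in_set_conv_nth)
  have onepos: "1 + q i * u > 0" if "i \<in> s" "-1 < u" "u < 1" for i u
  proof -
    have "\<bar>q i * u\<bar> < 1"
    proof -
      have "\<bar>q i * u\<bar> = \<bar>q i\<bar> * \<bar>u\<bar>" by (simp add: abs_mult)
      also have "\<dots> \<le> 1 * \<bar>u\<bar>" using qrange[OF that(1)] by (intro mult_right_mono) auto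
      also have "\<dots> < 1" using that by auto
      finally show ?thesis .
    qed
    then show ?thesis by linarith
  qed
  define c where "c = cs!(?n - 2)"
  have cgt: "c > -1" unfolding c_def using cstrict[of "?n - 2" "?n - 1"] cl n2 by auto
  have cle: "c \<le> 1" unfolding c_def using crange[of "?n - 2"] n2 by auto
  have cn1: "cs!(?n - 2 + 1) = -1" using cl n2 by (metis Suc_1 Suc_diff_Suc Suc_eq_plus1 Suc_le_lessD)
  define m1 where "m1 = min 1 (1 + c)"
  have m1pos: "m1 > 0" unfolding m1_def using cgt by simp
  obtain uh where uh: "0 \<le> uh" "uh < 1" "ln (1 - uh) < - ((- C0 / A (?n - 2)) - ln m1)"
    using ln_small_right by blast
  have Hup: "C0 + H uh > 0"
  proof -
    have "A (?n - 2) * \<Delta> (?n - 2) uh \<le> H uh" unfolding HA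
      by (rule member_le_sum) (use n2 Ann \<Delta>pos uh in \<open>auto intro!: mult_nonneg_nonneg\<close>)
    moreover have "\<Delta> (?n - 2) uh \<ge> ln m1 - ln (1 - uh)"
    proof -
      have "1 + c * uh \<ge> m1"
      proof (cases "c \<ge> 0")
        case True then show ?thesis unfolding m1_def using uh by simp
      next
        case False
        then have "c * uh \<ge> c * 1" using uh by (intro mult_left_mono_neg) auto
        then show ?thesis unfolding m1_def by simp
      qed
      then have "ln (1 + c * uh) \<ge> ln m1" using m1pos by simp
      then show ?thesis unfolding \<Delta>_def c_def[symmetric] cn1 by simp
    qed
    ultimately have "H uh \<ge> A (?n - 2) * (ln m1 - ln (1 - uh))"
      using Apenpos by (meson mult_left_mono less_imp_le order_trans)
    moreover have "A (?n - 2) * (ln m1 - ln (1 - uh)) > - C0"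
    proof -
      have "ln m1 - ln (1 - uh) > - C0 / A (?n - 2)" using uh by simp
      then have "A (?n - 2) * (ln m1 - ln (1 - uh)) > A (?n - 2) * (- C0 / A (?n - 2))"
        using Apenpos by (intro mult_strict_left_mono) auto
      then show ?thesis using Apenpos by simp
    qed
    ultimately show ?thesis by simp
  qed
  define c1 where "c1 = cs!1"
  have c1lt: "c1 < 1" unfolding c1_def using cstrict[of 0 1] c0 n2 by auto
  have c1ge: "c1 \<ge> -1" unfolding c1_def using crange[of 1] n2 by auto
  define m2 where "m2 = min 1 (1 - c1)"
  have m2pos: "m2 > 0" unfolding m2_def using c1lt by simp
  obtain ul where ul: "-1 < ul" "ul \<le> 0" "ln (1 + ul) < - (C0 / A 0 - ln m2)"
    using ln_small_left by blast
  have Hlo: "C0 + H ul < 0"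
  proof -
    have "H ul \<le> A 0 * \<Delta> 0 ul"
    proof -
      have "H ul = A 0 * \<Delta> 0 ul + (\<Sum>p\<in>{..<?n-1} - {0}. A p * \<Delta> p ul)"
        unfolding HA using n2 by (subst sum.remove[of _ 0]) auto
      moreover have "(\<Sum>p\<in>{..<?n-1} - {0}. A p * \<Delta> p ul) \<le> 0"
        using Ann \<Delta>neg ul by (intro sum_nonpos) (auto intro!: mult_nonneg_nonpos)
      ultimately show ?thesis by simp
    qed
    moreover have "\<Delta> 0 ul \<le> ln (1 + ul) - ln m2"
    proof -
      have "1 + c1 * ul \<ge> m2"
      proof (cases "c1 \<ge> 0")
        case True
        then have "c1 * ul \<ge> c1 * (-1)" using ul by (intro mult_left_mono) auto
        then show ?thesis unfolding m2_def by simp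
      next
        case False
        then have "c1 * ul \<ge> 0" using ul by (simp add: mult_nonpos_nonpos)
        then show ?thesis unfolding m2_def by simp
      qed
      then have "ln (1 + c1 * ul) \<ge> ln m2" using m2pos by simp
      then show ?thesis unfolding \<Delta>_def using c0 c1_def by simp
    qed
    ultimately have "H ul \<le> A 0 * (ln (1 + ul) - ln m2)"
      using A0pos by (meson mult_left_mono less_imp_le order_trans)
    moreover have "A 0 * (ln (1 + ul) - ln m2) < - C0"
    proof -
      have "ln (1 + ul) - ln m2 < - C0 / A 0" using ul by simp
      then have "A 0 * (ln (1 + ul) - ln m2) < A 0 * (- C0 / A 0)"
        using A0pos by (intro mult_strict_left_mono) auto
      then show ?thesis using A0pos by simp
    qed
    ultimately show ?thesis by simp
  qed
  have cont: "continuous_on {ul..uh} (\<lambda>u. C0 + H u)"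
    unfolding H_def
    by (intro continuous_intros) (use onepos ul uh in \<open>auto simp: less_imp_neq[symmetric]\<close>)
  obtain u where u: "ul \<le> u" "u \<le> uh" "C0 + H u = 0"
    using IVT'[of "\<lambda>u. C0 + H u" ul 0 uh] Hlo Hup cont ul uh by force
  show "\<exists>u. -1 < u \<and> u < 1 \<and> C0 + (\<Sum>i\<in>s. bb i * ln (1 + q i * u)) = 0"
    using u ul uh unfolding H_def by (intro exI[of _ u]) auto
qed

lemma onepos_lemma:
  fixes q u :: real
  assumes "-1 \<le> q" "q \<le> 1" "-1 < u" "u < 1"
  shows "1 + q * u > 0"
proof -
  have "\<bar>q * u\<bar> < 1"
  proof -
    have "\<bar>q * u\<bar> = \<bar>q\<bar> * \<bar>u\<bar>" by (simp add: abs_mult)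
    also have "\<dots> \<le> 1 * \<bar>u\<bar>" using assms by (intro mult_right_mono) auto
    also have "\<dots> < 1" using assms by auto
    finally show ?thesis .
  qed
  then show ?thesis by linarith
qed

lemma normalize_Pclos:
  fixes E :: "('v::finite \<times> 'v) set" and y :: "'v \<Rightarrow> real^'n"
  assumes nl: "\<forall>(i,i')\<in>E. i\<noteq>i'" and i0: "i0 \<in> sources E"
    and pos: "\<forall>i\<in>sources E. \<nu>$i > 0" and ker: "Gm E k y \<nu> = 0"
  shows "(\<Sum>i\<in>sources E. \<nu>$i) > 0"
    and "(\<chi> i. if i \<in> sources E then \<nu>$i / (\<Sum>i\<in>sources E. \<nu>$i) else 0) \<in> Pclos E k y"
proof -
  let ?s = "sources E"
  define \<sigma> where "\<sigma> = (\<Sum>i\<in>?s. \<nu>$i)"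
  show \<sigma>pos: "(\<Sum>i\<in>sources E. \<nu>$i) > 0" using pos i0 by (intro sum_pos) auto
  then have \<sigma>pos': "\<sigma> > 0" unfolding \<sigma>_def .
  show "(\<chi> i. if i \<in> sources E then \<nu>$i / (\<Sum>i\<in>sources E. \<nu>$i) else 0) \<in> Pclos E k y"
    unfolding \<sigma>_def[symmetric] Pclos_iff[OF nl]
  proof (intro conjI)
    show "\<forall>i. i \<notin> ?s \<longrightarrow> (\<chi> i. if i \<in> ?s then \<nu>$i / \<sigma> else 0)$i = 0" by simp
    show "\<forall>i\<in>?s. 0 \<le> (\<chi> i. if i \<in> ?s then \<nu>$i / \<sigma> else 0)$i" using pos \<sigma>pos' by (simp add: less_imp_le)
    have "Gm E k y (\<chi> i. if i \<in> ?s then \<nu>$i / \<sigma> else 0) = (1/\<sigma>) *\<^sub>R Gm E k y \<nu>"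
      by (rule Gm_scale_src) simp
    then show "Gm E k y (\<chi> i. if i \<in> ?s then \<nu>$i / \<sigma> else 0) = 0" using ker by simp
    have "(\<Sum>i\<in>?s. (\<chi> i. if i \<in> ?s then \<nu>$i / \<sigma> else 0)$i) = (\<Sum>i\<in>?s. \<nu>$i / \<sigma>)" by simp
    also have "\<dots> = 1" using \<sigma>pos' unfolding sum_divide_distrib[symmetric] \<sigma>_def by simp
    finally show "(\<Sum>i\<in>?s. (\<chi> i. if i \<in> ?s then \<nu>$i / \<sigma> else 0)$i) = 1" .
  qed
qed

lemma key1:
  fixes E :: "('v::finite \<times> 'v) set" and y :: "'v \<Rightarrow> real^'n"
  assumes nl: "\<forall>(i,i')\<in>E. i\<noteq>i'" and ne: "E \<noteq> {}"
    and pos0: "\<forall>i\<in>sources E. \<xi>0$i > 0" and ker0: "Gm E k y \<xi>0 = 0" and sc: "sign_cond E k y"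
  shows "\<exists>\<zeta>. (\<forall>i\<in>sources E. \<zeta>$i > 0) \<and> Gm E k y \<zeta> = 0 \<and>
     (\<forall>\<beta>\<in>defic_kernel y E. (\<Sum>i\<in>sources E. \<beta>$i * ln (\<zeta>$i)) = 0) \<and>
     (\<forall>\<nu>. (\<forall>i\<in>sources E. \<nu>$i > 0) \<and> Gm E k y \<nu> = 0 \<and> (\<forall>\<beta>\<in>defic_kernel y E. (\<Sum>i\<in>sources E. \<beta>$i * ln (\<nu>$i)) = 0)
        \<longrightarrow> (\<exists>c>0. \<forall>i\<in>sources E. \<nu>$i = c * \<zeta>$i))"
proof -
  let ?s = "sources E"
  have fin: "finite ?s" by simp
  obtain i0 where i0: "i0 \<in> ?s" using ne unfolding sources_def by auto
  obtain e1 e2 b where seg: "Pclos E k y = closed_segment e1 e2" and ne12: "e1 \<noteq> e2"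
    and DK: "defic_kernel y E = span {b}"
    and cond: "let q = (\<lambda>i. (e1 $ i - e2 $ i) / (e1 $ i + e2 $ i));
            cs = rev (sorted_list_of_set (q ` sources E));
            \<omega> = length cs;
            tb = (\<lambda>m. \<Sum>i \<in> {i \<in> sources E. q i = cs ! (m - 1)}. b $ i)
        in ((\<forall>i \<in> {1..<\<omega>}. (\<Sum>m = 1..i. tb m) \<ge> 0) \<or> (\<forall>i \<in> {1..<\<omega>}. (\<Sum>m = 1..i. tb m) \<le> 0))
           \<and> tb 1 * tb \<omega> < 0"
    using sc unfolding sign_cond_def by blast
  define q where "q = (\<lambda>i. (e1 $ i - e2 $ i) / (e1 $ i + e2 $ i))"
  define cs where "cs = rev (sorted_list_of_set (q ` ?s))"
  define tb where "tb = (\<lambda>m. \<Sum>i\<in>{i\<in>?s. q i = cs!(m-1)}. b$i)"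
  have cond': "((\<forall>i\<in>{1..<length cs}. (\<Sum>m=1..i. tb m) \<ge> 0) \<or> (\<forall>i\<in>{1..<length cs}. (\<Sum>m=1..i. tb m) \<le> 0))
      \<and> tb 1 * tb (length cs) < 0"
    using cond by (simp add: Let_def q_def cs_def tb_def)
  have e1P: "e1 \<in> Pclos E k y" and e2P: "e2 \<in> Pclos E k y" using seg by auto
  note e1 = e1P[unfolded Pclos_iff[OF nl]] and e2 = e2P[unfolded Pclos_iff[OF nl]]
  have bDK: "b \<in> defic_kernel y E" using DK span_base[of b "{b}"] by auto
  then have bsum: "(\<Sum>i\<in>?s. b$i) = 0" unfolding defic_kernel_def by auto
  obtain t0 where t0: "0 \<le> t0" "t0 \<le> 1"
     "(\<chi> i. if i \<in> ?s then \<xi>0$i / (\<Sum>i\<in>?s. \<xi>0$i) else 0) = (1-t0) *\<^sub>R e1 + t0 *\<^sub>R e2"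
    using normalize_Pclos(2)[OF nl i0 pos0 ker0] seg unfolding closed_segment_def by auto
  have spos: "e1$i + e2$i > 0" if i: "i \<in> ?s" for i
  proof (rule ccontr)
    assume "\<not> e1$i + e2$i > 0"
    then have z: "e1$i = 0" "e2$i = 0" using e1 e2 i by force+
    have "\<xi>0$i / (\<Sum>i\<in>?s. \<xi>0$i) = (1-t0)*e1$i + t0*e2$i"
      using arg_cong[OF t0(3), of "\<lambda>v. v$i"] i by simp
    also have "\<dots> = 0" using z by simp
    finally have a: "\<xi>0$i / (\<Sum>i\<in>?s. \<xi>0$i) = 0" .
    have "\<xi>0$i / (\<Sum>i\<in>?s. \<xi>0$i) > 0" using normalize_Pclos(1)[OF nl i0 pos0 ker0] pos0 i by simp
    then show False using a by linarith
  qed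
  have seg': "Pclos E k y = closed_segment e2 e1" using seg closed_segment_commute by metis
  obtain j2 where j2: "j2 \<in> ?s" "e2$j2 = 0" using endpoint_zero[OF nl seg ne12] by blast
  obtain j1 where j1: "j1 \<in> ?s" "e1$j1 = 0" using endpoint_zero[OF nl seg' ne12[symmetric]] by blast
  have qj2: "q j2 = 1" unfolding q_def using j2 spos[OF j2(1)] by simp
  have qj1: "q j1 = -1" unfolding q_def using j1 spos[OF j1(1)] by simp
  have qrange: "-1 \<le> q i \<and> q i \<le> 1" if i: "i \<in> ?s" for i
  proof -
    have s: "e1$i + e2$i > 0" using spos[OF i] .
    have "e1$i \<ge> 0" "e2$i \<ge> 0" using e1 e2 i by auto
    then have "-(e1$i + e2$i) \<le> e1$i - e2$i" "e1$i - e2$i \<le> e1$i + e2$i" by auto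
    then show ?thesis unfolding q_def using s by (simp add: divide_le_eq le_divide_eq)
  qed
  have pt: "(1-t)*e1$i + t*e2$i = (e1$i+e2$i)/2 * (1 + q i * (1 - 2*t))" if "i \<in> ?s" for i t
    unfolding q_def using spos[OF that] by (simp add: field_simps)
  have setcs: "set cs = q ` ?s" unfolding cs_def by simp
  have srt: "sorted_wrt (>) cs" unfolding cs_def sorted_wrt_rev
    using strict_sorted_list_of_set[of "q ` ?s"] by simp
  have lencs: "length cs = card (q ` ?s)" unfolding cs_def by simp
  have n2: "length cs \<ge> 2"
  proof -
    have "{1, -1} \<subseteq> q ` ?s" using qj1 qj2 j1 j2 by (metis empty_subsetI imageI insert_subset)
    then have "card {1, -1::real} \<le> card (q ` ?s)" by (intro card_mono) auto
    then show ?thesis unfolding lencs by simp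
  qed
  have cstrict: "cs!p' < cs!p" if "p < p'" "p' < length cs" for p p'
    using sorted_wrt_nth_less[OF srt that] by simp
  have csin: "-1 \<le> cs!p \<and> cs!p \<le> 1" if "p < length cs" for p
    using qrange that setcs by (metis imageE nth_mem)
  have c0: "cs!0 = 1"
  proof -
    obtain r where r: "r < length cs" "cs!r = 1" using qj2 j2 setcs by (metis imageI in_set_conv_nth)
    have "cs!r \<le> cs!0" using cstrict[of 0 r] r by (cases "r = 0") auto
    moreover have "cs \<noteq> []" using n2 by auto
    ultimately show ?thesis using csin[of 0] r by force
  qed
  have cl: "cs!(length cs - 1) = -1"
  proof -
    obtain r where r: "r < length cs" "cs!r = -1" using qj1 j1 setcs by (metis imageI in_set_conv_nth)
    have "cs!(length cs - 1) \<le> cs!r"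
    proof (cases "r = length cs - 1")
      case False then have "r < length cs - 1" using r by linarith
      moreover have "length cs - 1 < length cs" using r by simp
      ultimately show ?thesis using cstrict by fastforce
    qed simp
    then show ?thesis using csin[of "length cs - 1"] n2 r by auto
  qed
  define sg where "sg = (if (\<forall>i\<in>{1..<length cs}. (\<Sum>m=1..i. tb m) \<ge> 0) then 1 else (-1::real))"
  have sg2: "sg * sg = 1" "sg \<noteq> 0" unfolding sg_def by auto
  define bb where "bb i = sg * b$i" for i
  have tbb: "(\<Sum>i\<in>{i\<in>?s. q i = cs!(m-1)}. bb i) = sg * tb m" for m
    unfolding bb_def tb_def by (simp add: sum_distrib_left)
  have bbsum: "(\<Sum>i\<in>?s. bb i) = 0" unfolding bb_def using bsum by (simp add: sum_distrib_left[symmetric])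
  have Anonneg: "\<forall>p<length cs - 1. (\<Sum>m=1..p+1. (\<Sum>i\<in>{i\<in>?s. q i = cs!(m-1)}. bb i)) \<ge> 0"
  proof (intro allI impI)
    fix p assume p: "p < length cs - 1"
    have pin: "p+1 \<in> {1..<length cs}" using p by auto
    have "(\<Sum>m=1..p+1. (\<Sum>i\<in>{i\<in>?s. q i = cs!(m-1)}. bb i)) = sg * (\<Sum>m=1..p+1. tb m)"
      by (simp only: tbb sum_distrib_left[symmetric])
    also have "\<dots> \<ge> 0"
    proof (cases "\<forall>i\<in>{1..<length cs}. (\<Sum>m=1..i. tb m) \<ge> 0")
      case True
      have "(\<Sum>m=1..p+1. tb m) \<ge> 0" using bspec[OF True pin] .
      moreover have "sg = 1" using True unfolding sg_def by simp
      ultimately show ?thesis by simp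
    next
      case False
      then have F: "\<forall>i\<in>{1..<length cs}. (\<Sum>m=1..i. tb m) \<le> 0" using cond' by blast
      have "(\<Sum>m=1..p+1. tb m) \<le> 0" using bspec[OF F pin] .
      moreover have "sg = -1" using False unfolding sg_def by simp
      ultimately show ?thesis by simp
    qed
    finally show "(\<Sum>m=1..p+1. (\<Sum>i\<in>{i\<in>?s. q i = cs!(m-1)}. bb i)) \<ge> 0" .
  qed
  have tbprod: "(\<Sum>i\<in>{i\<in>?s. q i = cs!(1-1)}. bb i) * (\<Sum>i\<in>{i\<in>?s. q i = cs!(length cs - 1)}. bb i) < 0"
  proof -
    have "(\<Sum>i\<in>{i\<in>?s. q i = cs!(1-1)}. bb i) = sg * tb 1" using tbb[of 1] by simp
    moreover have "(\<Sum>i\<in>{i\<in>?s. q i = cs!(length cs - 1)}. bb i) = sg * tb (length cs)" using tbb[of "length cs"] by simp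
    moreover have "(sg * tb 1) * (sg * tb (length cs)) = (sg * sg) * (tb 1 * tb (length cs))" by (simp only: ac_simps)
    ultimately show ?thesis using cond' sg2(1) by (simp only: mult_1)
  qed
  note HP = H_props[OF fin srt setcs[symmetric] bbsum n2 c0 cl Anonneg tbprod]
  define C0 where "C0 = (\<Sum>i\<in>?s. bb i * ln ((e1$i + e2$i)/2))"
  obtain us where us: "-1 < us" "us < 1" "C0 + (\<Sum>i\<in>?s. bb i * ln (1 + q i * us)) = 0"
    using HP(2)[of C0] by blast
  have onepos: "1 + q i * u > 0" if "i \<in> ?s" "-1 < u" "u < 1" for i u
    using qrange[OF that(1)] that by (intro onepos_lemma) auto
  define ts where "ts = (1 - us)/2"
  have ts: "0 \<le> ts" "ts \<le> 1" using us unfolding ts_def by auto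
  define \<zeta> where "\<zeta> = (1 - ts) *\<^sub>R e1 + ts *\<^sub>R e2"
  have "\<zeta> \<in> closed_segment e1 e2" unfolding \<zeta>_def closed_segment_def using ts by blast
  then have \<zeta>P: "\<zeta> \<in> Pclos E k y" using seg by simp
  then have G\<zeta>: "Gm E k y \<zeta> = 0" using Pclos_iff[OF nl] by auto
  have \<zeta>i: "\<zeta>$i = (e1$i+e2$i)/2 * (1 + q i * us)" if "i \<in> ?s" for i
  proof -
    have "\<zeta>$i = (1-ts)*e1$i + ts*e2$i" unfolding \<zeta>_def by simp
    also have "\<dots> = (e1$i+e2$i)/2 * (1 + q i * (1 - 2*ts))" by (rule pt[OF that])
    also have "1 - 2*ts = us" unfolding ts_def by (simp add: field_simps)
    finally show ?thesis .
  qed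
  have \<zeta>pos: "\<forall>i\<in>?s. \<zeta>$i > 0"
  proof
    fix i assume i: "i \<in> ?s"
    have "(e1$i+e2$i)/2 * (1 + q i * us) > 0" using spos[OF i] onepos[OF i us(1,2)] by simp
    then show "\<zeta>$i > 0" using \<zeta>i[OF i] by simp
  qed
  have ln\<zeta>: "ln (\<zeta>$i) = ln ((e1$i+e2$i)/2) + ln (1 + q i * us)" if "i \<in> ?s" for i
    unfolding \<zeta>i[OF that] using spos[OF that] onepos[OF that us(1,2)] by (intro ln_mult_pos) auto
  have "(\<Sum>i\<in>?s. bb i * ln (\<zeta>$i)) = C0 + (\<Sum>i\<in>?s. bb i * ln (1 + q i * us))"
    unfolding C0_def sum.distrib[symmetric] by (intro sum.cong refl) (simp add: ln\<zeta> distrib_left)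
  then have sbb\<zeta>: "(\<Sum>i\<in>?s. bb i * ln (\<zeta>$i)) = 0" using us by simp
  have sb\<zeta>: "(\<Sum>i\<in>?s. b$i * ln (\<zeta>$i)) = 0"
  proof -
    have "(\<Sum>i\<in>?s. bb i * ln (\<zeta>$i)) = sg * (\<Sum>i\<in>?s. b$i * ln (\<zeta>$i))"
      unfolding bb_def by (simp add: sum_distrib_left mult.assoc)
    then show ?thesis using sbb\<zeta> sg2 by simp
  qed
  have B\<zeta>: "\<forall>\<beta>\<in>defic_kernel y E. (\<Sum>i\<in>?s. \<beta>$i * ln (\<zeta>$i)) = 0"
  proof
    fix \<beta> assume "\<beta> \<in> defic_kernel y E"
    then obtain c where "\<beta> = c *\<^sub>R b" using DK by (auto simp: span_singleton)
    then show "(\<Sum>i\<in>?s. \<beta>$i * ln (\<zeta>$i)) = 0" using sb\<zeta>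
      by (simp add: sum_distrib_left[symmetric] mult.assoc)
  qed
  have uniq: "\<forall>\<nu>. (\<forall>i\<in>?s. \<nu>$i > 0) \<and> Gm E k y \<nu> = 0 \<and> (\<forall>\<beta>\<in>defic_kernel y E. (\<Sum>i\<in>?s. \<beta>$i * ln (\<nu>$i)) = 0)
        \<longrightarrow> (\<exists>c>0. \<forall>i\<in>?s. \<nu>$i = c * \<zeta>$i)"
  proof (intro allI impI)
    fix \<nu> assume H: "(\<forall>i\<in>?s. \<nu>$i > 0) \<and> Gm E k y \<nu> = 0 \<and> (\<forall>\<beta>\<in>defic_kernel y E. (\<Sum>i\<in>?s. \<beta>$i * ln (\<nu>$i)) = 0)"
    then have pos: "\<forall>i\<in>?s. \<nu>$i > 0" and ker: "Gm E k y \<nu> = 0"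
      and lnb: "(\<Sum>i\<in>?s. b$i * ln (\<nu>$i)) = 0" using bDK by auto
    define \<sigma> where "\<sigma> = (\<Sum>i\<in>?s. \<nu>$i)"
    have \<sigma>pos: "\<sigma> > 0" unfolding \<sigma>_def using normalize_Pclos(1)[OF nl i0 pos ker] .
    define nh where "nh = (\<chi> i. if i \<in> ?s then \<nu>$i / \<sigma> else 0)"
    obtain t where t: "0 \<le> t" "t \<le> 1" "nh = (1-t) *\<^sub>R e1 + t *\<^sub>R e2"
      using normalize_Pclos(2)[OF nl i0 pos ker] seg unfolding closed_segment_def nh_def \<sigma>_def by auto
    define u where "u = 1 - 2*t"
    have nhi: "nh$i = (e1$i+e2$i)/2 * (1 + q i * u)" if "i \<in> ?s" for i
    proof -
      have "nh$i = (1-t)*e1$i + t*e2$i" using t(3) by simp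
      also have "\<dots> = (e1$i+e2$i)/2 * (1 + q i * (1 - 2*t))" by (rule pt[OF that])
      finally show ?thesis unfolding u_def .
    qed
    have nhpos: "nh$i > 0" if "i \<in> ?s" for i unfolding nh_def using that pos \<sigma>pos by simp
    have op: "1 + q i * u > 0" if i: "i \<in> ?s" for i
    proof -
      have "(e1$i+e2$i)/2 * (1 + q i * u) > 0" using nhi[OF i] nhpos[OF i] by simp
      moreover have "(e1$i+e2$i)/2 > 0" using spos[OF i] by simp
      ultimately show ?thesis by (simp add: zero_less_mult_iff)
    qed
    have u1: "-1 < u" using op[OF j2(1)] qj2 by simp
    have u2: "u < 1" using op[OF j1(1)] qj1 by simp
    have lnnh1: "ln (nh$i) = ln (\<nu>$i) - ln \<sigma>" if i: "i \<in> ?s" for i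
    proof -
      have "\<nu>$i > 0" using pos i by auto
      then show ?thesis unfolding nh_def using i \<sigma>pos by (simp add: ln_div)
    qed
    have lnnh2: "ln (nh$i) = ln ((e1$i+e2$i)/2) + ln (1 + q i * u)" if i: "i \<in> ?s" for i
      unfolding nhi[OF i] using spos[OF i] op[OF i] by (intro ln_mult_pos) auto
    have "(\<Sum>i\<in>?s. bb i * ln (nh$i)) = (\<Sum>i\<in>?s. bb i * ln (\<nu>$i)) - ln \<sigma> * (\<Sum>i\<in>?s. bb i)"
      by (simp add: lnnh1 right_diff_distrib sum_subtractf sum_distrib_left mult.commute)
    also have "(\<Sum>i\<in>?s. bb i * ln (\<nu>$i)) = sg * (\<Sum>i\<in>?s. b$i * ln (\<nu>$i))"
      unfolding bb_def by (simp add: sum_distrib_left mult.assoc)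
    finally have z1: "(\<Sum>i\<in>?s. bb i * ln (nh$i)) = 0" using lnb bbsum by simp
    have "(\<Sum>i\<in>?s. bb i * ln (nh$i)) = C0 + (\<Sum>i\<in>?s. bb i * ln (1 + q i * u))"
      unfolding C0_def sum.distrib[symmetric] by (intro sum.cong refl) (simp add: lnnh2 distrib_left)
    then have fu: "C0 + (\<Sum>i\<in>?s. bb i * ln (1 + q i * u)) = 0" using z1 by simp
    have "u = us"
    proof (rule linorder_cases[of u us])
      assume "u < us" then show ?thesis using HP(1)[OF u1 _ us(2)] fu us(3) by fastforce
    next
      assume "us < u" then show ?thesis using HP(1)[OF us(1) _ u2] fu us(3) by fastforce
    qed
    then have "nh$i = \<zeta>$i" if "i \<in> ?s" for i using nhi[OF that] \<zeta>i[OF that] by simp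
    then have "\<nu>$i = \<sigma> * \<zeta>$i" if "i \<in> ?s" for i
      using that \<sigma>pos unfolding nh_def by (auto simp: field_simps)
    then show "\<exists>c>0. \<forall>i\<in>?s. \<nu>$i = c * \<zeta>$i" using \<sigma>pos by blast
  qed
  show ?thesis using \<zeta>pos G\<zeta> B\<zeta> uniq by blast
qed

lemma ray_to_log:
  fixes y :: "'v::finite \<Rightarrow> real^'n" and \<zeta> :: "real^'v"
  assumes x: "positive_vec x" and S: "S \<noteq> {}" and \<zeta>: "\<forall>i\<in>S. \<zeta>$i > 0"
  shows "(\<exists>c>0. \<forall>i\<in>S. monom x (y i) = c * \<zeta>$i) \<longleftrightarrow> (\<forall>i\<in>S. \<forall>i'\<in>S. (y i - y i') \<bullet> lnv x = ln (\<zeta>$i) - ln (\<zeta>$i'))"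
proof
  assume "\<exists>c>0. \<forall>i\<in>S. monom x (y i) = c * \<zeta>$i"
  then obtain c where c: "c > 0" "\<forall>i\<in>S. monom x (y i) = c * \<zeta>$i" by blast
  have l: "y i \<bullet> lnv x = ln c + ln (\<zeta>$i)" if "i \<in> S" for i
  proof -
    have "y i \<bullet> lnv x = ln (monom x (y i))" using ln_monom[OF x] by simp
    also have "\<dots> = ln (c * \<zeta>$i)" using c that by simp
    also have "\<dots> = ln c + ln (\<zeta>$i)" using c \<zeta> that by (intro ln_mult_pos) auto
    finally show ?thesis .
  qed
  show "\<forall>i\<in>S. \<forall>i'\<in>S. (y i - y i') \<bullet> lnv x = ln (\<zeta>$i) - ln (\<zeta>$i')"
    using l by (simp add: inner_diff_left)
next
  assume h: "\<forall>i\<in>S. \<forall>i'\<in>S. (y i - y i') \<bullet> lnv x = ln (\<zeta>$i) - ln (\<zeta>$i')"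
  obtain i0 where i0: "i0 \<in> S" using S by auto
  define c where "c = monom x (y i0) / \<zeta>$i0"
  have cpos: "c > 0" unfolding c_def using monom_pos[OF x] \<zeta> i0 by simp
  have "monom x (y i) = c * \<zeta>$i" if i: "i \<in> S" for i
  proof -
    have "ln (monom x (y i)) - ln (monom x (y i0)) = ln (\<zeta>$i) - ln (\<zeta>$i0)"
      using h i i0 ln_monom[OF x] by (simp add: inner_diff_left)
    moreover have p: "monom x (y i) > 0" "monom x (y i0) > 0" "\<zeta>$i > 0" "\<zeta>$i0 > 0"
      using monom_pos[OF x] \<zeta> i i0 by auto
    ultimately have "ln (monom x (y i)) = ln (c * \<zeta>$i)"
      unfolding c_def by (simp add: ln_mult_pos ln_div)
    then show ?thesis using monom_pos[OF x] \<zeta> i cpos by simp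
  qed
  then show "\<exists>c>0. \<forall>i\<in>S. monom x (y i) = c * \<zeta>$i" using cpos by blast
qed

lemma exists_a:
  fixes y :: "'v::finite \<Rightarrow> real^'n" and \<zeta> :: "nat \<Rightarrow> real^'v" and src :: "nat \<Rightarrow> 'v set"
  assumes wd: "\<And>\<gamma>. (\<forall>j<l. (\<forall>i. i \<notin> src j \<longrightarrow> \<gamma> j$i = 0) \<and> (\<Sum>i\<in>src j. \<gamma> j$i) = 0) \<Longrightarrow>
      (\<Sum>j<l. \<Sum>i\<in>src j. \<gamma> j$i *\<^sub>R y i) = 0 \<Longrightarrow> (\<Sum>j<l. \<Sum>i\<in>src j. \<gamma> j$i * ln (\<zeta> j$i)) = 0"
  shows "\<exists>a. \<forall>j<l. \<forall>i\<in>src j. \<forall>i'\<in>src j. (y i - y i') \<bullet> a = ln (\<zeta> j$i) - ln (\<zeta> j$i')"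
proof -
  define Zok where "Zok \<gamma> \<longleftrightarrow> (\<forall>j<l. (\<forall>i. i \<notin> src j \<longrightarrow> \<gamma> j$i = 0) \<and> (\<Sum>i\<in>src j. \<gamma> j$i) = 0)" for \<gamma> :: "nat \<Rightarrow> real^'v"
  define M where "M \<gamma> = (\<Sum>j<l. \<Sum>i\<in>src j. \<gamma> j$i *\<^sub>R y i)" for \<gamma> :: "nat \<Rightarrow> real^'v"
  define \<Phi> where "\<Phi> \<gamma> = (\<Sum>j<l. \<Sum>i\<in>src j. \<gamma> j$i * ln (\<zeta> j$i))" for \<gamma> :: "nat \<Rightarrow> real^'v"
  have Zdiff: "Zok \<gamma>1 \<Longrightarrow> Zok \<gamma>2 \<Longrightarrow> Zok (\<lambda>j. \<gamma>1 j - \<gamma>2 j)" for \<gamma>1 \<gamma>2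
    unfolding Zok_def by (simp add: sum_subtractf)
  have Zadd: "Zok \<gamma>1 \<Longrightarrow> Zok \<gamma>2 \<Longrightarrow> Zok (\<lambda>j. \<gamma>1 j + \<gamma>2 j)" for \<gamma>1 \<gamma>2
    unfolding Zok_def by (simp add: sum.distrib)
  have Zscale: "Zok \<gamma> \<Longrightarrow> Zok (\<lambda>j. c *\<^sub>R \<gamma> j)" for \<gamma> c
    unfolding Zok_def by (simp add: sum_distrib_left[symmetric])
  have Z0: "Zok (\<lambda>j. 0)" unfolding Zok_def by simp
  have Mdiff: "M (\<lambda>j. \<gamma>1 j - \<gamma>2 j) = M \<gamma>1 - M \<gamma>2" for \<gamma>1 \<gamma>2
    unfolding M_def by (simp add: scaleR_diff_left sum_subtractf)
  have Madd: "M (\<lambda>j. \<gamma>1 j + \<gamma>2 j) = M \<gamma>1 + M \<gamma>2" for \<gamma>1 \<gamma>2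
    unfolding M_def by (simp add: scaleR_add_left sum.distrib)
  have Mscale: "M (\<lambda>j. c *\<^sub>R \<gamma> j) = c *\<^sub>R M \<gamma>" for \<gamma> c
    unfolding M_def by (simp add: scaleR_sum_right)
  have M0: "M (\<lambda>j. 0) = 0" unfolding M_def by simp
  have Pdiff: "\<Phi> (\<lambda>j. \<gamma>1 j - \<gamma>2 j) = \<Phi> \<gamma>1 - \<Phi> \<gamma>2" for \<gamma>1 \<gamma>2
    unfolding \<Phi>_def by (simp add: left_diff_distrib sum_subtractf)
  have Padd: "\<Phi> (\<lambda>j. \<gamma>1 j + \<gamma>2 j) = \<Phi> \<gamma>1 + \<Phi> \<gamma>2" for \<gamma>1 \<gamma>2
    unfolding \<Phi>_def by (simp add: distrib_right sum.distrib)
  have Pscale: "\<Phi> (\<lambda>j. c *\<^sub>R \<gamma> j) = c * \<Phi> \<gamma>" for \<gamma> c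
    unfolding \<Phi>_def by (simp add: sum_distrib_left mult.assoc)
  have wd': "Zok \<gamma> \<Longrightarrow> M \<gamma> = 0 \<Longrightarrow> \<Phi> \<gamma> = 0" for \<gamma>
    unfolding Zok_def M_def \<Phi>_def using wd by blast
  define U where "U = {M \<gamma> | \<gamma>. Zok \<gamma>}"
  define \<psi> where "\<psi> v = \<Phi> (SOME \<gamma>. Zok \<gamma> \<and> M \<gamma> = v)" for v
  have rep: "\<psi> (M \<gamma>) = \<Phi> \<gamma>" if "Zok \<gamma>" for \<gamma>
  proof -
    define \<gamma>' where "\<gamma>' = (SOME \<gamma>'. Zok \<gamma>' \<and> M \<gamma>' = M \<gamma>)"
    have g': "Zok \<gamma>' \<and> M \<gamma>' = M \<gamma>" unfolding \<gamma>'_def by (rule someI[of _ \<gamma>]) (use that in simp)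
    have "\<Phi> (\<lambda>j. \<gamma> j - \<gamma>' j) = 0" using wd'[OF Zdiff[OF that conjunct1[OF g']]] Mdiff g' by simp
    then show ?thesis unfolding \<psi>_def \<gamma>'_def[symmetric] using Pdiff by simp
  qed
  have Usub: "subspace U" unfolding subspace_def U_def
  proof (intro conjI ballI allI)
    have "0 = M (\<lambda>j. 0) \<and> Zok (\<lambda>j. 0)" using Z0 M0 by simp
    then show "0 \<in> {M \<gamma> |\<gamma>. Zok \<gamma>}" by blast
  next
    fix u v assume "u \<in> {M \<gamma> |\<gamma>. Zok \<gamma>}" "v \<in> {M \<gamma> |\<gamma>. Zok \<gamma>}"
    then obtain g1 g2 where "u = M g1" "Zok g1" "v = M g2" "Zok g2" by blast
    then have "u + v = M (\<lambda>j. g1 j + g2 j) \<and> Zok (\<lambda>j. g1 j + g2 j)" using Madd Zadd by simp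
    then show "u + v \<in> {M \<gamma> |\<gamma>. Zok \<gamma>}" by blast
  next
    fix c u assume "u \<in> {M \<gamma> |\<gamma>. Zok \<gamma>}"
    then obtain g where "u = M g" "Zok g" by blast
    then have "c *\<^sub>R u = M (\<lambda>j. c *\<^sub>R g j) \<and> Zok (\<lambda>j. c *\<^sub>R g j)" using Mscale Zscale by simp
    then show "c *\<^sub>R u \<in> {M \<gamma> |\<gamma>. Zok \<gamma>}" by blast
  qed
  have addU: "\<psi> (u + v) = \<psi> u + \<psi> v" if uv: "u \<in> U" "v \<in> U" for u v
  proof -
    obtain g1 g2 where g: "u = M g1" "Zok g1" "v = M g2" "Zok g2" using uv unfolding U_def by blast
    have "\<psi> (u + v) = \<psi> (M (\<lambda>j. g1 j + g2 j))" using g Madd by simp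
    also have "\<dots> = \<Phi> g1 + \<Phi> g2" using rep[OF Zadd[OF g(2) g(4)]] Padd by simp
    also have "\<dots> = \<psi> u + \<psi> v" using rep g by simp
    finally show ?thesis .
  qed
  have homU: "\<psi> (c *\<^sub>R u) = c * \<psi> u" if uU: "u \<in> U" for c u
  proof -
    obtain g where g: "u = M g" "Zok g" using uU unfolding U_def by blast
    have "\<psi> (c *\<^sub>R u) = \<psi> (M (\<lambda>j. c *\<^sub>R g j))" using g Mscale by simp
    also have "\<dots> = c * \<Phi> g" using rep[OF Zscale[OF g(2)]] Pscale by simp
    also have "\<dots> = c * \<psi> u" using rep g by simp
    finally show ?thesis .
  qed
  obtain a where a: "\<forall>u\<in>U. a \<bullet> u = \<psi> u" using extend_functional[OF Usub addU homU] by blast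
  have "(y i - y i') \<bullet> a = ln (\<zeta> j0$i) - ln (\<zeta> j0$i')" if j0: "j0 < l" and i: "i \<in> src j0" "i' \<in> src j0" for j0 i i'
  proof -
    define \<gamma> where "\<gamma> j = (if j = j0 then ind2 i i' else 0)" for j
    have Z: "Zok \<gamma>" unfolding Zok_def \<gamma>_def using i sum_ind2_0[OF i] by (auto simp: ind2_def)
    have "M \<gamma> = (\<Sum>j<l. if j = j0 then y i - y i' else 0)" unfolding M_def
    proof (intro sum.cong refl)
      fix j show "(\<Sum>ia\<in>src j. \<gamma> j $ ia *\<^sub>R y ia) = (if j = j0 then y i - y i' else 0)"
        unfolding \<gamma>_def using sum_ind2[OF i, of y] by simp
    qed
    also have "\<dots> = y i - y i'" using j0 by simp
    finally have M\<gamma>: "M \<gamma> = y i - y i'" .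
    have "\<Phi> \<gamma> = (\<Sum>j<l. if j = j0 then ln (\<zeta> j0$i) - ln (\<zeta> j0$i') else 0)" unfolding \<Phi>_def
    proof (intro sum.cong refl)
      fix j show "(\<Sum>ia\<in>src j. \<gamma> j $ ia * ln (\<zeta> j $ ia)) = (if j = j0 then ln (\<zeta> j0$i) - ln (\<zeta> j0$i') else 0)"
        unfolding \<gamma>_def using sum_ind2[OF i, of "\<lambda>ia. ln (\<zeta> j0 $ ia)"] by simp
    qed
    also have "\<dots> = ln (\<zeta> j0$i) - ln (\<zeta> j0$i')" using j0 by simp
    finally have P\<gamma>: "\<Phi> \<gamma> = ln (\<zeta> j0$i) - ln (\<zeta> j0$i')" .
    have "M \<gamma> \<in> U" unfolding U_def using Z by blast
    then have "a \<bullet> M \<gamma> = \<Phi> \<gamma>" using a rep[OF Z] by simp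
    then show ?thesis using M\<gamma> P\<gamma> by (simp add: inner_commute)
  qed
  then show ?thesis by blast
qed

lemma Dsum_in_L:
  fixes y :: "'v::finite \<Rightarrow> real^'n"
  assumes S: "finite S" and i0: "i0 \<in> S" and z: "(\<Sum>i\<in>S. c i) = 0"
  shows "(\<Sum>i\<in>S. c i *\<^sub>R y i) \<in> span {y i - y i' | i i'. i \<in> S \<and> i' \<in> S}"
proof -
  have "(\<Sum>i\<in>S. c i *\<^sub>R y i0) = 0" using z by (simp add: scaleR_sum_left[symmetric])
  then have "(\<Sum>i\<in>S. c i *\<^sub>R y i) = (\<Sum>i\<in>S. c i *\<^sub>R (y i - y i0))"
    by (simp add: scaleR_diff_right sum_subtractf)
  also have "\<dots> \<in> span {y i - y i' | i i'. i \<in> S \<and> i' \<in> S}"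
    using i0 by (intro span_sum span_mul span_base) auto
  finally show ?thesis .
qed

theorem theorem11:
  fixes V :: "'v::finite set" and E :: "('v \<times> 'v) set" and y :: "'v \<Rightarrow> real^'n"
    and k :: "'v \<times> 'v \<Rightarrow> real" and l :: nat and Es :: "nat \<Rightarrow> ('v \<times> 'v) set"
  assumes graph: "simple_digraph V E"
    and rates: "\<forall>e \<in> E. k e > 0"
    and partition: "(\<Union>j<l. Es j) = E" "\<forall>j<l. Es j \<noteq> {}"
      "\<forall>j<l. \<forall>j'<l. j \<noteq> j' \<longrightarrow> Es j \<inter> Es j' = {}"
    and connected: "\<forall>j<l. weakly_connected (Es j)"
    and independent: "independent_subnets l (\<lambda>j. stoich_space y (Es j)) (stoich_space y E)"
    and I: "\<exists>\<xi> :: nat \<Rightarrow> real^'v. (\<forall>j<l. \<forall>i \<in> sources (Es j). \<xi> j $ i > 0) \<and>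
              (\<Sum>j<l. gam (verts (Es j)) (Es j) k y (\<xi> j)) = 0"
    and III: "\<forall>j<l. defic y (Es j) \<le> 1 \<and>
              kin_space (verts (Es j)) (Es j) k y = L_space y (Es j) \<and>
              (defic y (Es j) = 1 \<longrightarrow> sign_cond (Es j) k y)"
  shows "(kin_space V E k y = span (\<Union>j<l. L_space y (Es j)) \<longrightarrow>
            (\<forall>x'. positive_vec x' \<longrightarrow>
               (\<exists>!x. pos_equilibrium E k y x \<and> x - x' \<in> kin_space V E k y)))
       \<and> (span (\<Union>j<l. L_space y (Es j)) = stoich_space y E \<longrightarrow>
            (\<forall>x'. positive_vec x' \<longrightarrow>
               (\<exists>!x. pos_equilibrium E k y x \<and> x - x' \<in> stoich_space y E)))"
proof -
  have nlE: "\<forall>(i,i')\<in>E. i\<noteq>i'" using graph unfolding simple_digraph_def by auto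
  have nl: "\<forall>(i,i')\<in>Es j. i\<noteq>i'" if "j < l" for j
  proof -
    have "Es j \<subseteq> E" using partition(1) that by auto
    then show ?thesis using nlE by blast
  qed
  have ne: "Es j \<noteq> {}" if "j < l" for j using partition(2) that by auto
  have srcne: "sources (Es j) \<noteq> {}" if "j < l" for j using ne[OF that] unfolding sources_def by auto
  have indep: "\<And>v. (\<forall>j<l. v j \<in> stoich_space y (Es j)) \<Longrightarrow> (\<Sum>j<l. v j) = 0 \<Longrightarrow> (\<forall>j<l. v j = 0)"
    using independent unfolding independent_subnets_def by blast
  obtain \<xi> :: "nat \<Rightarrow> real^'v" where \<xi>pos: "\<forall>j<l. \<forall>i \<in> sources (Es j). \<xi> j $ i > 0"
    and \<xi>sum: "(\<Sum>j<l. gam (verts (Es j)) (Es j) k y (\<xi> j)) = 0" using I by blast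
  have G\<xi>: "\<forall>j<l. Gm (Es j) k y (\<xi> j) = 0"
  proof -
    have "(\<Sum>j<l. gam (verts (Es j)) (Es j) k y (\<xi> j)) = (\<Sum>j<l. Gm (Es j) k y (\<xi> j))"
      by (intro sum.cong refl) (simp add: gam_eq'[OF nl])
    then have "(\<Sum>j<l. Gm (Es j) k y (\<xi> j)) = 0" using \<xi>sum by simp
    then show ?thesis using indep[of "\<lambda>j. Gm (Es j) k y (\<xi> j)"] Gm_stoich by blast
  qed
  define good where "good j \<zeta> \<longleftrightarrow> (\<forall>i\<in>sources (Es j). \<zeta>$i > 0) \<and> Gm (Es j) k y \<zeta> = 0 \<and>
     (\<forall>\<beta>\<in>defic_kernel y (Es j). (\<Sum>i\<in>sources (Es j). \<beta>$i * ln (\<zeta>$i)) = 0) \<and>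
     (\<forall>\<nu>. (\<forall>i\<in>sources (Es j). \<nu>$i > 0) \<and> Gm (Es j) k y \<nu> = 0 \<and>
          (\<forall>\<beta>\<in>defic_kernel y (Es j). (\<Sum>i\<in>sources (Es j). \<beta>$i * ln (\<nu>$i)) = 0)
        \<longrightarrow> (\<exists>c>0. \<forall>i\<in>sources (Es j). \<nu>$i = c * \<zeta>$i))" for j and \<zeta> :: "real^'v"
  have "\<forall>j. \<exists>\<zeta>. j < l \<longrightarrow> good j \<zeta>"
  proof
    fix j show "\<exists>\<zeta>. j < l \<longrightarrow> good j \<zeta>"
    proof (cases "j < l")
      case False then show ?thesis by simp
    next
      case jl: True
      have K: "kin_space (verts (Es j)) (Es j) k y = L_space y (Es j)"
        and dle: "defic y (Es j) \<le> 1" and sc: "defic y (Es j) = 1 \<longrightarrow> sign_cond (Es j) k y"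
        using III jl by auto
      show ?thesis
      proof (cases "defic y (Es j) = 0")
        case True
        have DK0: "defic_kernel y (Es j) \<subseteq> {0}" using True unfolding defic_def by simp
        have "good j (\<xi> j)" unfolding good_def
        proof (intro conjI)
          show "\<forall>i\<in>sources (Es j). \<xi> j $ i > 0" using \<xi>pos jl by auto
          show "Gm (Es j) k y (\<xi> j) = 0" using G\<xi> jl by auto
          show "\<forall>\<beta>\<in>defic_kernel y (Es j). (\<Sum>i\<in>sources (Es j). \<beta>$i * ln (\<xi> j $ i)) = 0"
            using DK0 by auto
          show "\<forall>\<nu>. (\<forall>i\<in>sources (Es j). \<nu>$i > 0) \<and> Gm (Es j) k y \<nu> = 0 \<and>
              (\<forall>\<beta>\<in>defic_kernel y (Es j). (\<Sum>i\<in>sources (Es j). \<beta>$i * ln (\<nu>$i)) = 0)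
            \<longrightarrow> (\<exists>c>0. \<forall>i\<in>sources (Es j). \<nu>$i = c * \<xi> j $ i)"
            using key0[OF nl[OF jl] ne[OF jl] K True] \<xi>pos G\<xi> jl by blast
        qed
        then show ?thesis by blast
      next
        case False
        then have "sign_cond (Es j) k y" using dle sc by simp
        then show ?thesis
          using key1[OF nl[OF jl] ne[OF jl], of "\<xi> j" k y] \<xi>pos G\<xi> jl unfolding good_def by blast
      qed
    qed
  qed
  then obtain \<zeta> where \<zeta>: "\<forall>j. j < l \<longrightarrow> good j (\<zeta> j)" using choice by metis
  have GmE: "Gm E k y \<nu> = (\<Sum>j<l. Gm (Es j) k y \<nu>)" for \<nu>
    using Gm_Union[OF partition(3), of k y \<nu>] partition(1) by simp
  have eqj: "ma_rhs E k y x = 0 \<longleftrightarrow> (\<forall>j<l. Gm (Es j) k y (mu y x) = 0)" for x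
  proof
    assume "ma_rhs E k y x = 0"
    then have "(\<Sum>j<l. Gm (Es j) k y (mu y x)) = 0" using ma_rhs_Gm GmE by metis
    then show "\<forall>j<l. Gm (Es j) k y (mu y x) = 0" using indep[of "\<lambda>j. Gm (Es j) k y (mu y x)"] Gm_stoich by blast
  next
    assume "\<forall>j<l. Gm (Es j) k y (mu y x) = 0"
    then show "ma_rhs E k y x = 0" unfolding ma_rhs_Gm GmE by simp
  qed
  have subeq: "Gm (Es j) k y (mu y x) = 0 \<longleftrightarrow>
      (\<forall>i\<in>sources (Es j). \<forall>i'\<in>sources (Es j). (y i - y i') \<bullet> lnv x = ln (\<zeta> j$i) - ln (\<zeta> j$i'))"
    if jl: "j < l" and x: "positive_vec x" for j x
  proof -
    have g: "good j (\<zeta> j)" using \<zeta> jl by blast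
    have \<zeta>pos: "\<forall>i\<in>sources (Es j). \<zeta> j $ i > 0" using g unfolding good_def by blast
    note rl = ray_to_log[OF x srcne[OF jl] \<zeta>pos, of y]
    show ?thesis
    proof
      assume G: "Gm (Es j) k y (mu y x) = 0"
      have mpos: "\<forall>i\<in>sources (Es j). (mu y x)$i > 0" unfolding mu_def using monom_pos[OF x] by simp
      have "\<forall>\<beta>\<in>defic_kernel y (Es j). (\<Sum>i\<in>sources (Es j). \<beta>$i * ln ((mu y x)$i)) = 0"
      proof
        fix \<beta> assume "\<beta> \<in> defic_kernel y (Es j)"
        then have z: "(\<Sum>i\<in>sources (Es j). \<beta>$i *\<^sub>R y i) = 0" unfolding defic_kernel_def by auto
        have "(\<Sum>i\<in>sources (Es j). \<beta>$i * ln ((mu y x)$i)) = (\<Sum>i\<in>sources (Es j). \<beta>$i *\<^sub>R y i) \<bullet> lnv x"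
          unfolding mu_def by (simp add: ln_monom[OF x] inner_sum_left)
        then show "(\<Sum>i\<in>sources (Es j). \<beta>$i * ln ((mu y x)$i)) = 0" using z by simp
      qed
      then obtain c where "c > 0" "\<forall>i\<in>sources (Es j). (mu y x)$i = c * \<zeta> j $ i"
        using g mpos G unfolding good_def by blast
      then have "\<exists>c>0. \<forall>i\<in>sources (Es j). monom x (y i) = c * \<zeta> j $ i" unfolding mu_def by auto
      then show "\<forall>i\<in>sources (Es j). \<forall>i'\<in>sources (Es j). (y i - y i') \<bullet> lnv x = ln (\<zeta> j$i) - ln (\<zeta> j$i')"
        using rl by blast
    next
      assume "\<forall>i\<in>sources (Es j). \<forall>i'\<in>sources (Es j). (y i - y i') \<bullet> lnv x = ln (\<zeta> j$i) - ln (\<zeta> j$i')"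
      then obtain c where c: "\<forall>i\<in>sources (Es j). monom x (y i) = c * \<zeta> j $ i" using rl by blast
      have "Gm (Es j) k y (mu y x) = c *\<^sub>R Gm (Es j) k y (\<zeta> j)"
        by (rule Gm_scale_src) (use c in \<open>simp add: mu_def\<close>)
      then show "Gm (Es j) k y (mu y x) = 0" using g unfolding good_def by simp
    qed
  qed
  obtain a where a: "\<forall>j<l. \<forall>i\<in>sources (Es j). \<forall>i'\<in>sources (Es j). (y i - y i') \<bullet> a = ln (\<zeta> j$i) - ln (\<zeta> j$i')"
  proof -
    have "\<exists>a. \<forall>j<l. \<forall>i\<in>sources (Es j). \<forall>i'\<in>sources (Es j). (y i - y i') \<bullet> a = ln (\<zeta> j$i) - ln (\<zeta> j$i')"
    proof (rule exists_a)
      fix \<gamma> :: "nat \<Rightarrow> real^'v"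
      assume Z: "\<forall>j<l. (\<forall>i. i \<notin> sources (Es j) \<longrightarrow> \<gamma> j$i = 0) \<and> (\<Sum>i\<in>sources (Es j). \<gamma> j$i) = 0"
        and M: "(\<Sum>j<l. \<Sum>i\<in>sources (Es j). \<gamma> j$i *\<^sub>R y i) = 0"
      have inS: "(\<Sum>i\<in>sources (Es j). \<gamma> j$i *\<^sub>R y i) \<in> stoich_space y (Es j)" if jl: "j < l" for j
      proof -
        obtain i0 where i0: "i0 \<in> sources (Es j)" using srcne[OF jl] by auto
        have "(\<Sum>i\<in>sources (Es j). \<gamma> j$i *\<^sub>R y i) \<in> L_space y (Es j)"
          unfolding L_space_def using Dsum_in_L[OF _ i0, of "\<lambda>i. \<gamma> j$i" y] Z jl by simp
        also have "L_space y (Es j) = range (Gm (Es j) k y)"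
        proof -
          have "kin_space (verts (Es j)) (Es j) k y = L_space y (Es j)" using III jl by blast
          then show ?thesis using gam_eq'[OF nl[OF jl], of k y] unfolding kin_space_def by simp
        qed
        finally show ?thesis using Gm_stoich by auto
      qed
      have z: "\<forall>j<l. (\<Sum>i\<in>sources (Es j). \<gamma> j$i *\<^sub>R y i) = 0"
        using indep[of "\<lambda>j. \<Sum>i\<in>sources (Es j). \<gamma> j$i *\<^sub>R y i"] inS M by blast
      have "(\<Sum>i\<in>sources (Es j). \<gamma> j$i * ln (\<zeta> j$i)) = 0" if jl: "j < l" for j
      proof -
        have "\<gamma> j \<in> defic_kernel y (Es j)" unfolding defic_kernel_def using Z z jl by auto
        then show ?thesis using \<zeta> jl unfolding good_def by blast
      qed
      then show "(\<Sum>j<l. \<Sum>i\<in>sources (Es j). \<gamma> j$i * ln (\<zeta> j$i)) = 0" by simp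
    qed
    then show ?thesis using that by blast
  qed
  define Lsum where "Lsum = span (\<Union>j<l. L_space y (Es j))"
  have perp: "(\<forall>v\<in>Lsum. w \<bullet> v = 0) \<longleftrightarrow> (\<forall>j<l. \<forall>i\<in>sources (Es j). \<forall>i'\<in>sources (Es j). (y i - y i') \<bullet> w = 0)" for w
  proof
    assume h: "\<forall>v\<in>Lsum. w \<bullet> v = 0"
    show "\<forall>j<l. \<forall>i\<in>sources (Es j). \<forall>i'\<in>sources (Es j). (y i - y i') \<bullet> w = 0"
    proof (intro allI impI ballI)
      fix j i i' assume "j < l" "i \<in> sources (Es j)" "i' \<in> sources (Es j)"
      then have "y i - y i' \<in> L_space y (Es j)" unfolding L_space_def by (intro span_base) auto
      then have "y i - y i' \<in> Lsum" unfolding Lsum_def using \<open>j < l\<close> by (intro span_base) auto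
      then have "w \<bullet> (y i - y i') = 0" using h by blast
      then show "(y i - y i') \<bullet> w = 0" by (simp only: inner_commute)
    qed
  next
    assume h: "\<forall>j<l. \<forall>i\<in>sources (Es j). \<forall>i'\<in>sources (Es j). (y i - y i') \<bullet> w = 0"
    have sub: "subspace {v. w \<bullet> v = 0}" unfolding subspace_def by (simp add: inner_add_right)
    have "L_space y (Es j) \<subseteq> {v. w \<bullet> v = 0}" if "j < l" for j
      unfolding L_space_def using h that sub by (intro span_minimal) (auto simp: inner_commute)
    then have "Lsum \<subseteq> {v. w \<bullet> v = 0}" unfolding Lsum_def using sub by (intro span_minimal) auto
    then show "\<forall>v\<in>Lsum. w \<bullet> v = 0" by auto
  qed
  have eqchar: "pos_equilibrium E k y x \<longleftrightarrow> positive_vec x \<and> (\<forall>v\<in>Lsum. (lnv x - a) \<bullet> v = 0)" for x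
  proof (cases "positive_vec x")
    case False then show ?thesis unfolding pos_equilibrium_def by simp
  next
    case x: True
    have "pos_equilibrium E k y x \<longleftrightarrow> (\<forall>j<l. Gm (Es j) k y (mu y x) = 0)"
      unfolding pos_equilibrium_def using x eqj by simp
    also have "\<dots> \<longleftrightarrow> (\<forall>j<l. \<forall>i\<in>sources (Es j). \<forall>i'\<in>sources (Es j). (y i - y i') \<bullet> lnv x = ln (\<zeta> j$i) - ln (\<zeta> j$i'))"
      using subeq x by simp
    also have "\<dots> \<longleftrightarrow> (\<forall>j<l. \<forall>i\<in>sources (Es j). \<forall>i'\<in>sources (Es j). (y i - y i') \<bullet> (lnv x - a) = 0)"
      using a by (simp add: inner_diff_right)
    also have "\<dots> \<longleftrightarrow> (\<forall>v\<in>Lsum. (lnv x - a) \<bullet> v = 0)" using perp by simp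
    finally show ?thesis using x by simp
  qed
  have Lsub: "subspace Lsum" unfolding Lsum_def by (rule subspace_span)
  have birch: "\<exists>!x. pos_equilibrium E k y x \<and> x - x' \<in> Lsum" if x': "positive_vec x'" for x' :: "real^'n"
  proof -
    obtain x where x: "positive_vec x" "x - x' \<in> Lsum" "\<forall>v\<in>Lsum. (lnv x - a) \<bullet> v = 0"
      using birch_exists[OF Lsub x'] by blast
    show ?thesis
    proof (rule ex1I[of _ x])
      show "pos_equilibrium E k y x \<and> x - x' \<in> Lsum" using x eqchar by simp
    next
      fix z assume z: "pos_equilibrium E k y z \<and> z - x' \<in> Lsum"
      then have zp: "positive_vec z" "\<forall>v\<in>Lsum. (lnv z - a) \<bullet> v = 0" using eqchar by auto
      have "z - x = (z - x') - (x - x')" by simp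
      then have "z - x \<in> Lsum" using z x(2) span_diff[of "z - x'" _ "x - x'"] unfolding Lsum_def by (metis span_diff)
      then show "z = x" using birch_unique[OF zp(1) x(1) _ zp(2) x(3)] by simp
    qed
  qed
  show ?thesis
  proof (intro conjI impI allI)
    fix x' :: "real^'n" assume K: "kin_space V E k y = span (\<Union>j<l. L_space y (Es j))" and x': "positive_vec x'"
    show "\<exists>!x. pos_equilibrium E k y x \<and> x - x' \<in> kin_space V E k y"
      using birch[OF x'] K unfolding Lsum_def by simp
  next
    fix x' :: "real^'n" assume S: "span (\<Union>j<l. L_space y (Es j)) = stoich_space y E" and x': "positive_vec x'"
    show "\<exists>!x. pos_equilibrium E k y x \<and> x - x' \<in> stoich_space y E"
      using birch[OF x'] S unfolding Lsum_def by simp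
  qed
qed

end
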